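(* Let $l\ge 3$ and suppose Erdős's Girth Conjecture holds for $l-1$, i.e. there exist a constant $c>0$ and a family of graphs $\{G_n\}$ with $|V(G_n)|=n$, $|E(G_n)|\ge c n^{1+1/(l-1)}$ and girth of $G_n$ greater than $2(l-1)$. Then $$ex(n,C_{2l},\{C_3,C_4,\dots,C_{2l-1}\})=\Theta(n^{2l/(l-1)}).$$
   Context: $C_k$ denotes the cycle with $k$ vertices. For a graph $H$ and a family of graphs $\mathcal F$, $ex(n,H,\mathcal F)$ is the maximum number of subgraphs isomorphic to $H$ in an $n$-vertex graph containing no member of $\mathcal F$ as a subgraph. The girth of a graph is the length of its shortest cycle. Asymptotic notation is as $n\to\infty$ with $l$ fixed. *)

theory Defs
  imports Complex_Main "HOL-Library.Landau_Symbols"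
begin

definition simple_graph :: "nat \<Rightarrow> nat set set \<Rightarrow> bool" where
  "simple_graph n E \<longleftrightarrow> (\<forall>e\<in>E. \<exists>u v. e = {u, v} \<and> u \<noteq> v \<and> u < n \<and> v < n)"

definition cycle_edges :: "nat list \<Rightarrow> nat set set" where
  "cycle_edges vs = {{vs ! i, vs ! ((i + 1) mod length vs)} | i. i < length vs}"

text \<open>F is (the edge set of) a subgraph of E isomorphic to C_k.\<close>
definition is_cycle_subgraph :: "nat set set \<Rightarrow> nat \<Rightarrow> nat set set \<Rightarrow> bool" where
  "is_cycle_subgraph E k F \<longleftrightarrow>
     (\<exists>vs. length vs = k \<and> k \<ge> 3 \<and> distinct vs \<and> F = cycle_edges vs \<and> F \<subseteq> E)"

definition has_cycle :: "nat set set \<Rightarrow> nat \<Rightarrow> bool" where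
  "has_cycle E k \<longleftrightarrow> (\<exists>F. is_cycle_subgraph E k F)"

definition num_cycles :: "nat set set \<Rightarrow> nat \<Rightarrow> nat" where
  "num_cycles E k = card {F. is_cycle_subgraph E k F}"

definition ex_even_cycle :: "nat \<Rightarrow> nat \<Rightarrow> nat" where
  "ex_even_cycle l n = Max {num_cycles E (2 * l) | E.
      simple_graph n E \<and> (\<forall>k. 3 \<le> k \<and> k \<le> 2 * l - 1 \<longrightarrow> \<not> has_cycle E k)}"

end

theory Submission
  imports Defs
begin
fun walk :: "nat set set \<Rightarrow> nat list \<Rightarrow> bool" where
  "walk E (x # y # ys) = ({x, y} \<in> E \<and> walk E (y # ys))"
| "walk E _ = True"

lemma walk_nth: "walk E xs \<longleftrightarrow> (\<forall>i. Suc i < length xs \<longrightarrow> {xs ! i, xs ! Suc i} \<in> E)"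
proof (induction E xs rule: walk.induct)
  case (1 E x y ys)
  show ?case
  proof
    assume "walk E (x # y # ys)"
    then show "\<forall>i. Suc i < length (x # y # ys) \<longrightarrow> {(x # y # ys) ! i, (x # y # ys) ! Suc i} \<in> E"
      using 1 by (auto simp: nth_Cons split: nat.splits)
  next
    assume h: "\<forall>i. Suc i < length (x # y # ys) \<longrightarrow> {(x # y # ys) ! i, (x # y # ys) ! Suc i} \<in> E"
    have "{x,y} \<in> E" using h[rule_format, of 0] by simp
    moreover have "walk E (y # ys)" unfolding 1
    proof (intro allI impI)
      fix i assume "Suc i < length (y # ys)"
      then show "{(y # ys) ! i, (y # ys) ! Suc i} \<in> E" using h[rule_format, of "Suc i"] by simp
    qed
    ultimately show "walk E (x # y # ys)" by simp
  qed
qed auto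

lemma walk_append:
  "walk E (xs @ ys) \<longleftrightarrow> walk E xs \<and> walk E ys \<and> (xs \<noteq> [] \<longrightarrow> ys \<noteq> [] \<longrightarrow> {last xs, hd ys} \<in> E)"
proof (induction xs)
  case Nil then show ?case by simp
next
  case (Cons x xs)
  then show ?case by (cases xs; cases ys) auto
qed

lemma walk_rev: "walk E (rev xs) \<longleftrightarrow> walk E xs"
proof (induction xs)
  case Nil then show ?case by simp
next
  case (Cons x xs)
  then show ?case by (cases xs) (auto simp: walk_append insert_commute)
qed

lemma walk_take: "walk E xs \<Longrightarrow> walk E (take k xs)"
  by (metis append_take_drop_id walk_append)

lemma walk_drop: "walk E xs \<Longrightarrow> walk E (drop k xs)"
  by (metis append_take_drop_id walk_append)

lemma walk_mono: "walk E xs \<Longrightarrow> E \<subseteq> E' \<Longrightarrow> walk E' xs"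
  by (auto simp: walk_nth)

lemma cycle_edges_subset_iff:
  assumes "vs \<noteq> []"
  shows "cycle_edges vs \<subseteq> E \<longleftrightarrow> walk E (vs @ [hd vs])"
proof -
  have nth_app: "(vs @ [hd vs]) ! Suc i = vs ! ((i + 1) mod length vs)" if "i < length vs" for i
  proof (cases "Suc i < length vs")
    case True then show ?thesis by (simp add: nth_append)
  next
    case False
    then have "Suc i = length vs" using that by simp
    then show ?thesis using assms by (simp add: nth_append hd_conv_nth)
  qed
  have "cycle_edges vs \<subseteq> E \<longleftrightarrow> (\<forall>i < length vs. {vs ! i, vs ! ((i + 1) mod length vs)} \<in> E)"
    unfolding cycle_edges_def by blast
  also have "\<dots> \<longleftrightarrow> (\<forall>i. Suc i < length (vs @ [hd vs]) \<longrightarrow> {(vs @ [hd vs]) ! i, (vs @ [hd vs]) ! Suc i} \<in> E)"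
    using nth_app by (auto simp: nth_append)
  finally show ?thesis by (simp add: walk_nth)
qed

lemma closed_walk_cycle:
  assumes "distinct vs" "length vs \<ge> 3" "walk E (vs @ [hd vs])"
  shows "has_cycle E (length vs)"
proof -
  have "vs \<noteq> []" using assms(2) by auto
  then have "cycle_edges vs \<subseteq> E" using cycle_edges_subset_iff assms(3) by blast
  then show ?thesis unfolding has_cycle_def is_cycle_subgraph_def using assms by blast
qed

lemma has_cycle_mono: "has_cycle E k \<Longrightarrow> E \<subseteq> E' \<Longrightarrow> has_cycle E' k"
  unfolding has_cycle_def is_cycle_subgraph_def by blast

lemma walk_last_edge: "walk E q \<Longrightarrow> length q \<ge> 2 \<Longrightarrow> {last (butlast q), last q} \<in> E"
proof -
  assume w: "walk E q" and l: "length q \<ge> 2"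
  have "Suc (length q - 2) < length q" using l by simp
  then have "{q ! (length q - 2), q ! Suc (length q - 2)} \<in> E"
    using w unfolding walk_nth by blast
  moreover have "last q = q ! Suc (length q - 2)"
  proof -
    have "Suc (length q - 2) = length q - 1" using l by simp
    moreover have "q \<noteq> []" using l by auto
    ultimately show ?thesis by (simp add: last_conv_nth)
  qed
  moreover have "last (butlast q) = q ! (length q - 2)"
  proof -
    have "butlast q \<noteq> []" using l by (cases q; cases "tl q") auto
    then have "last (butlast q) = butlast q ! (length q - 2)" by (simp add: last_conv_nth numeral_2_eq_2)
    also have "\<dots> = q ! (length q - 2)" using l by (simp add: nth_butlast)
    finally show ?thesis .
  qed
  ultimately show ?thesis by simp
qed

lemma two_paths_vs:
  assumes wp: "walk E p" and wq: "walk E q" and dp: "distinct p" and dq: "distinct q"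
    and lp: "length p \<ge> 2" and lq: "length q \<ge> 2" and hd: "hd p = hd q" and la: "last p = last q"
    and disj: "set p \<inter> set q \<subseteq> {hd p, last p}" and vs_def: "vs = p @ rev (butlast (tl q))"
  shows "distinct vs \<and> walk E (vs @ [hd vs]) \<and> length vs = length p + length q - 2"
proof -
  have lvs: "length vs = length p + length q - 2" unfolding vs_def using lq by simp
  have qq: "q = hd q # tl q" using lq by (cases q) auto
  have bq: "butlast q = hd q # butlast (tl q)" using lq by (cases q; cases "tl q") auto
  have hvs: "hd vs = hd p" unfolding vs_def using lp by (cases p) auto
  have "vs @ [hd vs] = vs @ [hd q]" using hvs hd by simp
  also have "\<dots> = p @ rev (butlast q)" unfolding vs_def by (subst bq) simp
  finally have eq: "vs @ [hd vs] = p @ rev (butlast q)" .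
  have "walk E (rev (butlast q))" using wq walk_take[of E q "length q - 1"] walk_rev
    by (simp add: butlast_conv_take)
  moreover have "{last p, hd (rev (butlast q))} \<in> E"
  proof -
    have "butlast q \<noteq> []" using lq by (cases q; cases "tl q") auto
    then have "hd (rev (butlast q)) = last (butlast q)" by (simp add: hd_rev)
    then show ?thesis using walk_last_edge[OF wq lq] la by (simp add: insert_commute)
  qed
  ultimately have w: "walk E (vs @ [hd vs])" unfolding eq using wp walk_append by blast
  have "distinct vs"
  proof -
    have d1: "distinct (butlast (tl q))" using dq by (simp add: distinct_butlast distinct_tl)
    have "x \<notin> set p" if x: "x \<in> set (butlast (tl q))" for x
    proof
      assume xp: "x \<in> set p"
      have xq: "x \<in> set q" using x by (cases q) (auto dest: in_set_butlastD)
      have "x \<noteq> hd q" using x dq by (cases q) (auto dest: in_set_butlastD)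
      moreover have "x \<noteq> last q"
      proof -
        have "butlast (tl q) = tl (butlast q)" by (simp add: butlast_tl)
        then have "x \<in> set (butlast q)" using x by (cases "butlast q") auto
        moreover have "last q \<notin> set (butlast q)"
        proof -
          have "q \<noteq> []" using lq by auto
          then have "distinct (butlast q @ [last q])" using dq by simp
          then show ?thesis by simp
        qed
        ultimately show ?thesis by blast
      qed
      ultimately show False using xp xq disj hd la by blast
    qed
    then show ?thesis unfolding vs_def using dp d1 by auto
  qed
  then show ?thesis using w lvs by simp
qed

lemma two_paths_cycle_disj:
  assumes wp: "walk E p" and wq: "walk E q" and dp: "distinct p" and dq: "distinct q"
    and lp: "length p \<ge> 2" and lq: "length q \<ge> 2" and hd: "hd p = hd q" and la: "last p = last q"
    and disj: "set p \<inter> set q \<subseteq> {hd p, last p}" and len: "length p + length q \<ge> 5"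
  shows "has_cycle E (length p + length q - 2)"
proof -
  have "distinct (p @ rev (butlast (tl q))) \<and> walk E ((p @ rev (butlast (tl q))) @ [hd (p @ rev (butlast (tl q)))])
    \<and> length (p @ rev (butlast (tl q))) = length p + length q - 2"
    by (rule two_paths_vs[OF assms(1-9)]) simp
  moreover have "3 \<le> length p + length q - 2" using len by simp
  ultimately show ?thesis using closed_walk_cycle[of "p @ rev (butlast (tl q))" E] by simp
qed

lemma distinct_hd_last_single:
  assumes "distinct q" "q \<noteq> []" "last q = hd q" shows "length q = 1"
proof -
  obtain a q' where q: "q = a # q'" using assms(2) by (cases q) auto
  show ?thesis
  proof (cases "q' = []")
    case True then show ?thesis using q by simp
  next
    case False
    then have "last q' \<in> set q'" by simp
    moreover have "last q' = a" using assms(3) q False by simp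
    ultimately show ?thesis using assms(1) q by simp
  qed
qed

lemma two_paths_cycle:
  assumes "walk E p" "walk E q" "distinct p" "distinct q" "p \<noteq> []" "q \<noteq> []"
    "hd p = hd q" "last p = last q" "p \<noteq> q"
  shows "\<exists>k. 3 \<le> k \<and> k \<le> length p + length q - 2 \<and> has_cycle E k"
  using assms
proof (induction p arbitrary: q)
  case Nil then show ?case by simp
next
  case (Cons a p')
  note wp = Cons.prems(1) and wq = Cons.prems(2) and dp = Cons.prems(3) and dq = Cons.prems(4)
  obtain q' where qdef: "q = a # q'" using Cons.prems(6,7) by (cases q) auto
  have p'ne: "p' \<noteq> []"
  proof
    assume "p' = []"
    then have "last q = hd q" using Cons.prems(7,8) by simp
    then have "length q = 1" using distinct_hd_last_single dq Cons.prems(6) by blast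
    then show False using Cons.prems(9) \<open>p' = []\<close> qdef by simp
  qed
  have q'ne: "q' \<noteq> []"
  proof
    assume "q' = []"
    then have "last p' = a" using Cons.prems(8) qdef p'ne by simp
    then show False using dp p'ne last_in_set by fastforce
  qed
  show ?case
  proof (cases "hd p' = hd q'")
    case True
    have "walk E p'" using wp by (cases p') auto
    moreover have "walk E q'" using wq qdef by (cases q') auto
    moreover have "last p' = last q'" using Cons.prems(8) qdef p'ne q'ne by simp
    moreover have "p' \<noteq> q'" using Cons.prems(9) qdef by simp
    ultimately obtain k where "3 \<le> k" "k \<le> length p' + length q' - 2" "has_cycle E k"
      using Cons.IH[of q'] dp dq qdef p'ne q'ne True by auto
    then show ?thesis using qdef by (intro exI[of _ k]) auto
  next
    case False
    define p where "p = a # p'"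
    have lp: "length p \<ge> 2" using p'ne unfolding p_def by (cases p') auto
    have lq: "length q \<ge> 2" using q'ne unfolding qdef by (cases q') auto
    define P where "P = (\<lambda>j. 0 < j \<and> j < length p \<and> p ! j \<in> set q)"
    have "P (length p - 1)"
    proof -
      have "p ! (length p - 1) = last p" unfolding p_def by (simp add: last_conv_nth)
      also have "\<dots> = last q" using Cons.prems(8) p_def by simp
      finally show ?thesis unfolding P_def using lp Cons.prems(6) by simp
    qed
    define j where "j = (LEAST j. P j)"
    have Pj: "P j" unfolding j_def by (rule LeastI) fact
    have jmin: "\<not> P s" if "s < j" for s using not_less_Least[of s P] that unfolding j_def by blast
    have j0: "0 < j" and jl: "j < length p" and jq: "p ! j \<in> set q" using Pj unfolding P_def by auto
    obtain j' where j'l: "j' < length q" and j'eq: "q ! j' = p ! j" using jq by (auto simp: in_set_conv_nth)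
    have hdp: "p ! 0 = a" unfolding p_def by simp
    have hdq: "q ! 0 = a" unfolding qdef by simp
    have dp2: "distinct p" using dp p_def by simp
    have j'0: "0 < j'"
    proof (rule ccontr)
      assume "\<not> 0 < j'"
      then have "p ! j = p ! 0" using j'eq hdp hdq by simp
      moreover have "(p ! j = p ! 0) = (j = 0)"
        by (rule nth_eq_iff_index_eq) (use dp2 j0 jl in auto)
      ultimately show False using j0 by simp
    qed
    define p1 where "p1 = take (Suc j) p"
    define q1 where "q1 = take (Suc j') q"
    have w1: "walk E p1" unfolding p1_def using walk_take wp p_def by blast
    have w2: "walk E q1" unfolding q1_def using walk_take wq by blast
    have d1: "distinct p1" unfolding p1_def using dp2 by simp
    have d2: "distinct q1" unfolding q1_def using dq by simp
    have lp1: "length p1 = Suc j" unfolding p1_def using jl by simp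
    have lq1: "length q1 = Suc j'" unfolding q1_def using j'l by simp
    have hp1: "hd p1 = a" unfolding p1_def p_def by simp
    have hq1: "hd q1 = a" unfolding q1_def qdef by simp
    have lap1: "last p1 = p ! j" unfolding p1_def by (subst last_conv_nth) (use jl in auto)
    have laq1: "last q1 = p ! j" unfolding q1_def by (subst last_conv_nth) (use j'l j'eq in auto)
    have sd: "set p1 \<inter> set q1 \<subseteq> {hd p1, last p1}"
    proof
      fix x assume x: "x \<in> set p1 \<inter> set q1"
      then obtain s where s: "s < Suc j" "x = p ! s" unfolding p1_def using jl
        by (auto simp: in_set_conv_nth)
      have "x \<in> set q" using x unfolding q1_def by (meson IntD2 in_set_takeD)
      then have "s = 0 \<or> s = j" using jmin[of s] s jl unfolding P_def by auto
      then show "x \<in> {hd p1, last p1}" using s hdp hp1 lap1 by auto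
    qed
    have l5: "length p1 + length q1 \<ge> 5"
    proof (rule ccontr)
      assume "\<not> ?thesis"
      then have "j = 1" "j' = 1" using lp1 lq1 j0 j'0 by auto
      then have "hd p' = hd q'" using j'eq p'ne q'ne unfolding p_def qdef by (simp add: hd_conv_nth)
      then show False using False by simp
    qed
    have "length p1 \<ge> 2" "length q1 \<ge> 2" using lp1 lq1 j0 j'0 by auto
    moreover have "hd p1 = hd q1" using hp1 hq1 by simp
    moreover have "last p1 = last q1" using lap1 laq1 by simp
    ultimately have "has_cycle E (length p1 + length q1 - 2)"
      by (rule two_paths_cycle_disj[OF w1 w2 d1 d2 _ _ _ _ sd l5])
    moreover have "length p1 + length q1 - 2 \<le> length (a # p') + length q - 2"
      using lp1 lq1 jl j'l p_def by simp
    moreover have "3 \<le> length p1 + length q1 - 2" using \<open>length p1 + length q1 \<ge> 5\<close> by simp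
    ultimately show ?thesis by (intro exI[of _ "length p1 + length q1 - 2"]) simp
  qed
qed

definition nbr :: "nat set set \<Rightarrow> nat set \<Rightarrow> nat \<Rightarrow> nat set" where
  "nbr H W x = {u \<in> W. {u, x} \<in> H}"

definition paths :: "nat set set \<Rightarrow> nat set \<Rightarrow> nat \<Rightarrow> nat \<Rightarrow> nat list set" where
  "paths H W v j = {P. length P = Suc j \<and> hd P = v \<and> distinct P \<and> walk H P \<and> set P \<subseteq> W}"

lemma finite_paths: "finite W \<Longrightarrow> finite (paths H W v j)"
proof -
  assume "finite W"
  then have "finite {P. set P \<subseteq> W \<and> length P = Suc j}" by (rule finite_lists_length_eq)
  then show ?thesis by (rule rev_finite_subset) (auto simp: paths_def)
qed

lemma close_cycle:
  assumes "distinct P" "walk H P" "i < length P" "length P - i \<ge> 3" "{P ! i, last P} \<in> H"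
  shows "has_cycle H (length P - i)"
proof -
  define vs where "vs = drop i P"
  have "distinct vs" "walk H vs" unfolding vs_def using assms walk_drop by auto
  moreover have lv: "length vs = length P - i" unfolding vs_def by simp
  moreover have "hd vs = P ! i" unfolding vs_def using assms(3) by (simp add: hd_drop_conv_nth)
  moreover have "last vs = last P" unfolding vs_def using assms(3) by simp
  moreover have "vs \<noteq> []" using lv assms(4) by auto
  ultimately have "walk H (vs @ [hd vs])" using assms(5) walk_append by (simp add: insert_commute)
  then show ?thesis using closed_walk_cycle \<open>distinct vs\<close> lv assms(4) by metis
qed

lemma nbr_inter_path:
  assumes "P \<in> paths H W v j" "\<forall>x. {x} \<notin> H" "\<forall>k. 3 \<le> k \<and> k \<le> Suc j \<longrightarrow> \<not> has_cycle H k"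
  shows "nbr H W (last P) \<inter> set P \<subseteq> {P ! (length P - 2)}"
proof
  fix x assume x: "x \<in> nbr H W (last P) \<inter> set P"
  have lP: "length P = Suc j" "distinct P" "walk H P" using assms(1) unfolding paths_def by auto
  obtain i where i: "i < length P" "x = P ! i" using x by (auto simp: in_set_conv_nth)
  have e: "{P ! i, last P} \<in> H" using x i unfolding nbr_def by auto
  have lastP: "last P = P ! j" using lP(1) by (subst last_conv_nth) auto
  have "i \<noteq> j" using e lastP assms(2) by auto
  moreover have "\<not> i + 2 \<le> j"
  proof
    assume "i + 2 \<le> j"
    then have "has_cycle H (length P - i)" using close_cycle[OF lP(2,3) i(1) _ e] lP(1) by simp
    moreover have "3 \<le> length P - i" "length P - i \<le> Suc j" using \<open>i + 2 \<le> j\<close> lP(1) by auto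
    ultimately show False using assms(3) by blast
  qed
  ultimately have "i = length P - 2" using i(1) lP(1) by simp
  then show "x \<in> {P ! (length P - 2)}" using i by simp
qed

lemma path_count:
  assumes fin: "finite W" and v: "v \<in> W" and loop: "\<forall>x. {x} \<notin> H"
    and deg: "\<forall>x\<in>W. real (card (nbr H W x)) \<ge> d" and d1: "d \<ge> 1"
    and nocyc: "\<forall>k. 3 \<le> k \<and> k \<le> j \<longrightarrow> \<not> has_cycle H k"
  shows "real (card (paths H W v j)) \<ge> (d - 1) ^ j"
  using nocyc
proof (induction j)
  case 0
  have "paths H W v 0 = {[v]}"
  proof
    show "paths H W v 0 \<subseteq> {[v]}"
    proof
      fix P assume "P \<in> paths H W v 0"
      then have "length P = 1" "hd P = v" unfolding paths_def by auto
      then show "P \<in> {[v]}" by (cases P) auto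
    qed
    show "{[v]} \<subseteq> paths H W v 0" using v unfolding paths_def by auto
  qed
  then show ?case by simp
next
  case (Suc j)
  have IH: "real (card (paths H W v j)) \<ge> (d - 1) ^ j" using Suc by auto
  define S where "S = (SIGMA P:paths H W v j. nbr H W (last P) - set P)"
  define f where "f = (\<lambda>(P::nat list, u::nat). P @ [u])"
  have finn: "finite (nbr H W x)" for x using fin unfolding nbr_def by simp
  have sub: "f ` S \<subseteq> paths H W v (Suc j)"
  proof
    fix Q assume "Q \<in> f ` S"
    then obtain P u where Pu: "P \<in> paths H W v j" "u \<in> nbr H W (last P)" "u \<notin> set P" "Q = P @ [u]"
      unfolding S_def f_def by auto
    have P: "length P = Suc j" "hd P = v" "distinct P" "walk H P" "set P \<subseteq> W"
      using Pu(1) unfolding paths_def by auto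
    have "P \<noteq> []" using P(1) by auto
    moreover have "{last P, u} \<in> H" using Pu(2) unfolding nbr_def by (auto simp: insert_commute)
    ultimately have "walk H Q" using P(4) Pu(4) walk_append by auto
    moreover have "u \<in> W" using Pu(2) unfolding nbr_def by auto
    ultimately show "Q \<in> paths H W v (Suc j)" using P Pu \<open>P \<noteq> []\<close> unfolding paths_def by auto
  qed
  have inj: "inj_on f S" unfolding f_def inj_on_def by auto
  have finS: "finite S" unfolding S_def using finite_paths[OF fin] finn by auto
  have cardS: "card S = (\<Sum>P\<in>paths H W v j. card (nbr H W (last P) - set P))"
    unfolding S_def using finite_paths[OF fin] finn by (simp add: card_SigmaI)
  have each: "real (card (nbr H W (last P) - set P)) \<ge> d - 1" if P: "P \<in> paths H W v j" for P
  proof -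
    have "nbr H W (last P) \<inter> set P \<subseteq> {P ! (length P - 2)}"
      using nbr_inter_path[OF P loop] Suc.prems by auto
    then have "card (nbr H W (last P) \<inter> set P) \<le> card {P ! (length P - 2)}"
      by (intro card_mono) auto
    then have c1: "card (nbr H W (last P) \<inter> set P) \<le> 1" by simp
    have "card (nbr H W (last P) - set P) = card (nbr H W (last P)) - card (nbr H W (last P) \<inter> set P)"
      using finn by (simp add: card_Diff_subset_Int)
    moreover have "card (nbr H W (last P) \<inter> set P) \<le> card (nbr H W (last P))"
      using finn by (simp add: card_mono)
    ultimately have "real (card (nbr H W (last P) - set P)) = real (card (nbr H W (last P))) - real (card (nbr H W (last P) \<inter> set P))"
      by simp
    moreover have "last P \<in> W"
    proof -
      have "P \<noteq> []" "set P \<subseteq> W" using P unfolding paths_def by auto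
      then show ?thesis using last_in_set by blast
    qed
    ultimately show ?thesis using deg c1 by fastforce
  qed
  have "real (card (paths H W v (Suc j))) \<ge> real (card (f ` S))"
    using card_mono[OF finite_paths[OF fin] sub] by simp
  also have "card (f ` S) = card S" using card_image[OF inj] .
  finally have "real (card (paths H W v (Suc j))) \<ge> (\<Sum>P\<in>paths H W v j. real (card (nbr H W (last P) - set P)))"
    using cardS by simp
  moreover have "(\<Sum>P\<in>paths H W v j. real (card (nbr H W (last P) - set P))) \<ge> (\<Sum>P\<in>paths H W v j. d - 1)"
    using each by (rule sum_mono)
  moreover have "(\<Sum>P\<in>paths H W v j. d - 1) = real (card (paths H W v j)) * (d - 1)" by simp
  moreover have "real (card (paths H W v j)) * (d - 1) \<ge> (d - 1) ^ j * (d - 1)"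
    using IH d1 by (simp add: mult_right_mono)
  ultimately show ?case by (simp add: mult.commute)
qed

definition graph_on :: "nat set \<Rightarrow> nat set set \<Rightarrow> bool" where
  "graph_on V H \<longleftrightarrow> (\<forall>e\<in>H. \<exists>u w. e = {u, w} \<and> u \<noteq> w \<and> u \<in> V \<and> w \<in> V)"

lemma graph_on_finite: "finite V \<Longrightarrow> graph_on V H \<Longrightarrow> finite H"
proof -
  assume "finite V" "graph_on V H"
  then have "H \<subseteq> Pow V" unfolding graph_on_def by auto
  then show "finite H" using \<open>finite V\<close> by (simp add: finite_subset)
qed

lemma mindeg:
  assumes "finite V" "graph_on V H" "real (card H) > D * real (card V)" "D \<ge> 0"
  shows "\<exists>W \<subseteq> V. W \<noteq> {} \<and> (\<forall>x\<in>W. real (card (nbr H W x)) > D)"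
  using assms
proof (induction "card V" arbitrary: V H rule: less_induct)
  case less
  note finV = less.prems(1) and gV = less.prems(2) and cH = less.prems(3) and D0 = less.prems(4)
  show ?case
  proof (cases "\<forall>x\<in>V. real (card (nbr H V x)) > D")
    case True
    have "V \<noteq> {}"
    proof
      assume "V = {}"
      then have "H = {}" using gV unfolding graph_on_def by auto
      then show False using cH \<open>V = {}\<close> by simp
    qed
    then show ?thesis using True by blast
  next
    case False
    then obtain x where x: "x \<in> V" "real (card (nbr H V x)) \<le> D" by auto
    define H' where "H' = {e \<in> H. x \<notin> e}"
    define V' where "V' = V - {x}"
    have finH: "finite H" using graph_on_finite finV gV by blast
    have g': "graph_on V' H'" using gV unfolding graph_on_def H'_def V'_def by fastforce
    have "{e \<in> H. x \<in> e} \<subseteq> (\<lambda>u. {u, x}) ` nbr H V x"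
    proof
      fix e assume e: "e \<in> {e \<in> H. x \<in> e}"
      then obtain u w where uw: "e = {u, w}" "u \<noteq> w" "u \<in> V" "w \<in> V" using gV unfolding graph_on_def by blast
      show "e \<in> (\<lambda>u. {u, x}) ` nbr H V x"
      proof (cases "u = x")
        case True
        then have "e = {w, x}" using uw by auto
        then show ?thesis using e uw unfolding nbr_def by auto
      next
        case False
        then have "w = x" using e uw by auto
        then show ?thesis using e uw unfolding nbr_def by auto
      qed
    qed
    moreover have "finite (nbr H V x)" using finV unfolding nbr_def by simp
    ultimately have "card {e \<in> H. x \<in> e} \<le> card ((\<lambda>u. {u, x}) ` nbr H V x)"
      by (intro card_mono) auto
    also have "\<dots> \<le> card (nbr H V x)" by (rule card_image_le) fact
    finally have "card {e \<in> H. x \<in> e} \<le> card (nbr H V x)" .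
    moreover have "H = H' \<union> {e \<in> H. x \<in> e}" unfolding H'_def by auto
    then have "card H \<le> card H' + card {e \<in> H. x \<in> e}" using card_Un_le[of H' "{e \<in> H. x \<in> e}"] by simp
    ultimately have "real (card H') \<ge> real (card H) - D" using x(2) by linarith
    moreover have "real (card V') = real (card V) - 1"
    proof -
      have "card V \<ge> 1" using x(1) finV by (metis One_nat_def Suc_leI card_gt_0_iff empty_iff)
      then show ?thesis unfolding V'_def using x(1) finV by (simp add: of_nat_diff)
    qed
    ultimately have cH': "real (card H') > D * real (card V')"
    proof -
      assume a1: "real (card H') \<ge> real (card H) - D" and a2: "real (card V') = real (card V) - 1"
      have "real (card V) = real (card V') + 1" using a2 by simp
      then have "D * real (card V) = D + D * real (card V')" by (simp add: algebra_simps)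
      then show ?thesis using a1 cH by linarith
    qed
    have "card V' < card V" unfolding V'_def using x(1) finV by (meson card_Diff1_less)
    moreover have "finite V'" unfolding V'_def using finV by simp
    ultimately have "\<exists>W \<subseteq> V'. W \<noteq> {} \<and> (\<forall>y\<in>W. real (card (nbr H' W y)) > D)"
      using less.hyps g' cH' D0 by blast
    then obtain W where W: "W \<subseteq> V'" "W \<noteq> {}" "\<forall>y\<in>W. real (card (nbr H' W y)) > D"
      by blast
    have "nbr H' W y = nbr H W y" if "y \<in> W" for y
      using W(1) that unfolding nbr_def H'_def V'_def by auto
    then show ?thesis using W V'_def by (intro exI[of _ W]) auto
  qed
qed

lemma simple_graph_on: "simple_graph n E \<Longrightarrow> graph_on {0..<n} E"
  unfolding simple_graph_def graph_on_def by auto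

lemma graph_on_loop: "graph_on V E \<Longrightarrow> \<forall>x. {x} \<notin> E"
  unfolding graph_on_def by (metis doubleton_eq_iff insert_absorb2 insert_not_empty singleton_insert_inj_eq)

lemma paths_last_inj:
  assumes nocyc: "\<forall>m. 3 \<le> m \<and> m \<le> 2 * k \<longrightarrow> \<not> has_cycle H m"
  shows "inj_on last (paths H W v k)"
proof
  fix P Q assume P: "P \<in> paths H W v k" and Q: "Q \<in> paths H W v k" and l: "last P = last Q"
  show "P = Q"
  proof (rule ccontr)
    assume "P \<noteq> Q"
    have "length P = Suc k" "length Q = Suc k" using P Q unfolding paths_def by auto
    moreover have "P \<noteq> []" "Q \<noteq> []" using \<open>length P = Suc k\<close> \<open>length Q = Suc k\<close> by auto
    ultimately obtain m where "3 \<le> m" "m \<le> length P + length Q - 2" "has_cycle H m"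
      using two_paths_cycle[of H P Q] P Q l \<open>P \<noteq> Q\<close> unfolding paths_def by auto
    then show False using nocyc \<open>length P = Suc k\<close> \<open>length Q = Suc k\<close> by auto
  qed
qed

lemma moore:
  assumes sg: "simple_graph n E" and k1: "k \<ge> 1"
    and nocyc: "\<forall>m. 3 \<le> m \<and> m \<le> 2 * k \<longrightarrow> \<not> has_cycle E m"
  shows "real (card E) \<le> real n * (real n powr (1 / real k) + 2)"
proof (rule ccontr)
  assume "\<not> ?thesis"
  then have big: "real (card E) > (real n powr (1 / real k) + 2) * real (card {0..<n})" by (simp add: mult.commute)
  define D where "D = real n powr (1 / real k) + 2"
  have D0: "D \<ge> 0" unfolding D_def by simp
  obtain W where W: "W \<subseteq> {0..<n}" "W \<noteq> {}" "\<forall>x\<in>W. real (card (nbr E W x)) > D"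
    using mindeg[OF _ simple_graph_on[OF sg] big[folded D_def] D0] by auto
  obtain v where v: "v \<in> W" using W(2) by auto
  have finW: "finite W" using W(1) finite_subset by blast
  have npos: "n > 0" using W(1) v by auto
  have "real (card (paths E W v k)) \<ge> (D - 1) ^ k"
  proof (rule path_count[OF finW v graph_on_loop[OF simple_graph_on[OF sg]]])
    show "\<forall>x\<in>W. D \<le> real (card (nbr E W x))" using W(3) by (simp add: less_imp_le)
    show "1 \<le> D" unfolding D_def by simp
    show "\<forall>m. 3 \<le> m \<and> m \<le> k \<longrightarrow> \<not> has_cycle E m" using nocyc by auto
  qed
  moreover have "(D - 1) ^ k > real n"
  proof -
    have "(real n powr (1 / real k)) ^ k = real n"
      using npos k1 by (simp add: powr_realpow[symmetric] powr_powr)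
    moreover have "(real n powr (1 / real k)) ^ k < (real n powr (1 / real k) + 1) ^ k"
      by (rule power_strict_mono) (use k1 in auto)
    ultimately show ?thesis unfolding D_def by (simp add: add.commute)
  qed
  moreover have "card (paths E W v k) \<le> card W"
  proof -
    have "last ` paths E W v k \<subseteq> W"
    proof
      fix x assume "x \<in> last ` paths E W v k"
      then obtain P where "P \<in> paths E W v k" "x = last P" by auto
      then have "P \<noteq> []" "set P \<subseteq> W" unfolding paths_def by auto
      then show "x \<in> W" using \<open>x = last P\<close> last_in_set by blast
    qed
    then have "card (last ` paths E W v k) \<le> card W" using finW by (simp add: card_mono)
    moreover have "card (last ` paths E W v k) = card (paths E W v k)"
      by (rule card_image) (rule paths_last_inj[OF nocyc])
    ultimately show ?thesis by simp
  qed
  moreover have "card W \<le> n" using W(1) by (metis card_atLeastLessThan card_mono finite_atLeastLessThan diff_zero)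
  ultimately show False by linarith
qed

lemma take_Suc_hd: "xs \<noteq> [] \<Longrightarrow> take (Suc l) xs = hd xs # take l (drop 1 xs)"
  by (cases xs) auto

lemma cyc_determined:
  assumes l2: "l \<ge> 2"
    and nocyc: "\<forall>m. 3 \<le> m \<and> m \<le> 2 * l - 2 \<longrightarrow> \<not> has_cycle E m"
    and c1: "length vs = 2 * l" "distinct vs" "walk E (vs @ [hd vs])"
    and c2: "length ws = 2 * l" "distinct ws" "walk E (ws @ [hd ws])"
    and e0: "vs ! 0 = ws ! 0" and e1: "vs ! 1 = ws ! 1"
    and el: "vs ! l = ws ! l" and el1: "vs ! Suc l = ws ! Suc l"
  shows "vs = ws"
proof -
  have uniq: "p = q" if H: "walk E p" "walk E q" "distinct p" "distinct q" "length p = l" "length q = l"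
    "hd p = hd q" "last p = last q" for p q
  proof (rule ccontr)
    assume "p \<noteq> q"
    moreover have "p \<noteq> []" "q \<noteq> []" using H l2 by auto
    ultimately obtain m where "3 \<le> m" "m \<le> length p + length q - 2" "has_cycle E m"
      using two_paths_cycle[of E p q] H by auto
    then show False using nocyc H by auto
  qed
  have wv: "walk E vs" "walk E ws" using c1 c2 walk_append by auto
  have vsne: "vs \<noteq> []" "ws \<noteq> []" using c1 c2 l2 by auto
  define p1 where "p1 = take l (drop 1 vs)"
  define p2 where "p2 = take l (drop 1 ws)"
  have "p1 = p2"
  proof (rule uniq)
    show "walk E p1" "walk E p2" unfolding p1_def p2_def using wv walk_take walk_drop by blast+
    show "distinct p1" "distinct p2" unfolding p1_def p2_def using c1 c2 by auto
    show "length p1 = l" "length p2 = l" unfolding p1_def p2_def using c1 c2 l2 by auto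
    show "hd p1 = hd p2" unfolding p1_def p2_def using c1 c2 l2 e1
      by (simp add: hd_conv_nth)
    have "last p1 = vs ! l" unfolding p1_def using c1 l2 by (subst last_conv_nth) auto
    moreover have "last p2 = ws ! l" unfolding p2_def using c2 l2 by (subst last_conv_nth) auto
    ultimately show "last p1 = last p2" using el by simp
  qed
  define q1 where "q1 = drop (Suc l) vs @ [hd vs]"
  define q2 where "q2 = drop (Suc l) ws @ [hd ws]"
  have "q1 = q2"
  proof (rule uniq)
    have "q1 = drop (Suc l) (vs @ [hd vs])" unfolding q1_def using c1 l2 by simp
    then show "walk E q1" using c1 walk_drop by metis
    have "q2 = drop (Suc l) (ws @ [hd ws])" unfolding q2_def using c2 l2 by simp
    then show "walk E q2" using c2 walk_drop by metis
    have "hd vs \<notin> set (drop (Suc l) vs)"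
    proof -
      have "vs = hd vs # tl vs" using vsne by simp
      then have "hd vs \<notin> set (tl vs)" using c1(2) by (metis distinct.simps(2))
      moreover have "set (drop (Suc l) vs) \<subseteq> set (tl vs)"
        by (metis drop_Suc set_drop_subset)
      ultimately show ?thesis by blast
    qed
    then show "distinct q1" unfolding q1_def using c1 by simp
    have "hd ws \<notin> set (drop (Suc l) ws)"
    proof -
      have "ws = hd ws # tl ws" using vsne by simp
      then have "hd ws \<notin> set (tl ws)" using c2(2) by (metis distinct.simps(2))
      moreover have "set (drop (Suc l) ws) \<subseteq> set (tl ws)"
        by (metis drop_Suc set_drop_subset)
      ultimately show ?thesis by blast
    qed
    then show "distinct q2" unfolding q2_def using c2 by simp
    show "length q1 = l" "length q2 = l" unfolding q1_def q2_def using c1 c2 l2 by auto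
    have "hd q1 = vs ! Suc l" unfolding q1_def using c1 l2 by (simp add: hd_drop_conv_nth)
    moreover have "hd q2 = ws ! Suc l" unfolding q2_def using c2 l2 by (simp add: hd_drop_conv_nth)
    ultimately show "hd q1 = hd q2" using el1 by simp
    show "last q1 = last q2" unfolding q1_def q2_def using e0 vsne by (simp add: hd_conv_nth)
  qed
  have A: "vs = (hd vs # p1) @ butlast q1"
  proof -
    have "take (Suc l) vs = hd vs # p1" unfolding p1_def using take_Suc_hd[OF vsne(1)] by simp
    moreover have "butlast q1 = drop (Suc l) vs" by (simp add: q1_def)
    ultimately show ?thesis by (metis append_take_drop_id)
  qed
  have B: "ws = (hd ws # p2) @ butlast q2"
  proof -
    have "take (Suc l) ws = hd ws # p2" unfolding p2_def using take_Suc_hd[OF vsne(2)] by simp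
    moreover have "butlast q2 = drop (Suc l) ws" by (simp add: q2_def)
    ultimately show ?thesis by (metis append_take_drop_id)
  qed
  have "hd vs = hd ws" using e0 vsne by (simp add: hd_conv_nth)
  then show ?thesis using A B \<open>p1 = p2\<close> \<open>q1 = q2\<close> by metis
qed

lemma dir_edges_card:
  assumes sg: "simple_graph n E"
  shows "finite {(a, b). {a, b} \<in> E} \<and> card {(a, b). {a, b} \<in> E} \<le> 4 * card E"
proof -
  have finE: "finite E" using graph_on_finite[OF _ simple_graph_on[OF sg]] by simp
  have sub: "{(a, b). {a, b} \<in> E} \<subseteq> (\<Union>e\<in>E. e \<times> e)"
  proof
    fix x assume "x \<in> {(a, b). {a, b} \<in> E}"
    then obtain a b where "x = (a, b)" "{a, b} \<in> E" by blast
    moreover have "(a, b) \<in> {a, b} \<times> {a, b}" by simp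
    ultimately show "x \<in> (\<Union>e\<in>E. e \<times> e)" by blast
  qed
  have ce: "card (e \<times> e) \<le> 4" if "e \<in> E" for e
  proof -
    have "\<exists>u w. e = {u, w} \<and> u \<noteq> w \<and> u < n \<and> w < n" using sg that unfolding simple_graph_def by (rule bspec)
    then obtain u w where "e = {u, w}" "u \<noteq> w" by (elim exE conjE)
    then have "card e = 2" by simp
    then show ?thesis by (simp add: card_cartesian_product)
  qed
  have fine: "finite (e \<times> e)" if "e \<in> E" for e
  proof -
    have "\<exists>u w. e = {u, w} \<and> u \<noteq> w \<and> u < n \<and> w < n" using sg that unfolding simple_graph_def by (rule bspec)
    then obtain u w where "e = {u, w}" by (elim exE conjE)
    then show ?thesis by simp
  qed
  have finU: "finite (\<Union>e\<in>E. e \<times> e)" by (rule finite_UN_I[OF finE]) (rule fine)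
  have "card (\<Union>e\<in>E. e \<times> e) \<le> (\<Sum>e\<in>E. card (e \<times> e))" by (rule card_UN_le[OF finE])
  also have "\<dots> \<le> (\<Sum>e\<in>E. 4)" using ce by (rule sum_mono)
  finally have "card (\<Union>e\<in>E. e \<times> e) \<le> 4 * card E" by simp
  then show ?thesis using card_mono[OF finU sub] finite_subset[OF sub finU] by simp
qed

lemma cyc_upper:
  assumes sg: "simple_graph n E" and l2: "l \<ge> 2"
    and nocyc: "\<forall>m. 3 \<le> m \<and> m \<le> 2 * l - 2 \<longrightarrow> \<not> has_cycle E m"
  shows "num_cycles E (2 * l) \<le> 16 * card E ^ 2"
proof -
  define Cyc where "Cyc = {F. is_cycle_subgraph E (2 * l) F}"
  define Q where "Q = (\<lambda>F vs. length vs = 2 * l \<and> 2 * l \<ge> 3 \<and> distinct vs \<and> F = cycle_edges vs \<and> F \<subseteq> E)"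
  define vsOf where "vsOf = (\<lambda>F. SOME vs. Q F vs)"
  have vsQ: "Q F (vsOf F)" if "F \<in> Cyc" for F
  proof -
    have "\<exists>vs. Q F vs" using that unfolding Cyc_def Q_def is_cycle_subgraph_def by blast
    then show ?thesis unfolding vsOf_def by (rule someI_ex)
  qed
  have vsW: "walk E (vsOf F @ [hd (vsOf F)])" if "F \<in> Cyc" for F
  proof -
    have "vsOf F \<noteq> []" using vsQ[OF that] l2 unfolding Q_def by auto
    then show ?thesis using vsQ[OF that] cycle_edges_subset_iff unfolding Q_def by metis
  qed
  define g where "g = (\<lambda>F. ((vsOf F ! 0, vsOf F ! 1), (vsOf F ! l, vsOf F ! Suc l)))"
  define Dd where "Dd = {(a, b). {a, b} \<in> E}"
  have edge: "{vsOf F ! i, vsOf F ! Suc i} \<in> E" if "F \<in> Cyc" "Suc i < 2 * l" for F i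
  proof -
    have "{(vsOf F @ [hd (vsOf F)]) ! i, (vsOf F @ [hd (vsOf F)]) ! Suc i} \<in> E"
      using vsW[OF that(1)] vsQ[OF that(1)] that(2) unfolding walk_nth Q_def by simp
    then show ?thesis using vsQ[OF that(1)] that(2) unfolding Q_def by (simp add: nth_append)
  qed
  have img: "g ` Cyc \<subseteq> Dd \<times> Dd"
  proof
    fix x assume "x \<in> g ` Cyc"
    then obtain F where F: "F \<in> Cyc" "x = g F" by auto
    have "{vsOf F ! 0, vsOf F ! Suc 0} \<in> E" using edge[OF F(1), of 0] l2 by simp
    moreover have "{vsOf F ! l, vsOf F ! Suc l} \<in> E" using edge[OF F(1), of l] l2 by simp
    ultimately show "x \<in> Dd \<times> Dd" unfolding F(2) g_def Dd_def by simp
  qed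
  have inj: "inj_on g Cyc"
  proof
    fix F1 F2 assume F1: "F1 \<in> Cyc" and F2: "F2 \<in> Cyc" and eq: "g F1 = g F2"
    have q1: "length (vsOf F1) = 2 * l" "distinct (vsOf F1)" using vsQ[OF F1] unfolding Q_def by auto
    have q2: "length (vsOf F2) = 2 * l" "distinct (vsOf F2)" using vsQ[OF F2] unfolding Q_def by auto
    have e: "vsOf F1 ! 0 = vsOf F2 ! 0" "vsOf F1 ! 1 = vsOf F2 ! 1"
      "vsOf F1 ! l = vsOf F2 ! l" "vsOf F1 ! Suc l = vsOf F2 ! Suc l"
      using eq unfolding g_def by auto
    have "vsOf F1 = vsOf F2"
      by (rule cyc_determined[OF l2 nocyc q1 vsW[OF F1] q2 vsW[OF F2] e])
    then show "F1 = F2" using vsQ[OF F1] vsQ[OF F2] unfolding Q_def by simp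
  qed
  have DdE: "finite Dd" "card Dd \<le> 4 * card E" using dir_edges_card[OF sg] unfolding Dd_def by auto
  have "card Cyc \<le> card (Dd \<times> Dd)" using card_inj_on_le[OF inj img] DdE by simp
  also have "\<dots> = card Dd * card Dd" by (simp add: card_cartesian_product)
  also have "\<dots> \<le> (4 * card E) * (4 * card E)" by (rule mult_le_mono[OF DdE(2) DdE(2)])
  finally show ?thesis unfolding num_cycles_def Cyc_def by (simp add: power2_eq_square)
qed

lemma card_cross_pair:
  assumes "a \<noteq> b" "card ({a, b} \<inter> A) = 1" shows "a \<in> A \<longleftrightarrow> b \<notin> A"
  using assms by (cases "a \<in> A"; cases "b \<in> A") auto

lemma maxcut:
  assumes "finite V" "graph_on V E"
  shows "\<exists>A. card E \<le> 2 * card {e \<in> E. card (e \<inter> A) = 1}"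
  using assms
proof (induction V arbitrary: E rule: finite_induct)
  case empty
  then have "E = {}" unfolding graph_on_def by auto
  then show ?case by simp
next
  case (insert x F)
  define E' where "E' = {e \<in> E. x \<notin> e}"
  define Ex where "Ex = {e \<in> E. x \<in> e}"
  have finE: "finite E" using graph_on_finite insert by blast
  have g': "graph_on F E'" using insert.prems unfolding graph_on_def E'_def by fastforce
  obtain A' where A': "card E' \<le> 2 * card {e \<in> E'. card (e \<inter> A') = 1}" using insert.IH[OF g'] by blast
  define C' where "C' = {e \<in> E'. card (e \<inter> A') = 1}"
  define Ex1 where "Ex1 = {e \<in> Ex. e \<subseteq> insert x A'}"
  define Ex2 where "Ex2 = Ex - Ex1"
  have cE: "card E = card E' + card Ex1 + card Ex2"
  proof -
    have "E = E' \<union> Ex" "E' \<inter> Ex = {}" unfolding E'_def Ex_def by auto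
    then have "card E = card E' + card Ex" using finE
      by (metis card_Un_disjoint finite_Un)
    moreover have "Ex = Ex1 \<union> Ex2" "Ex1 \<inter> Ex2 = {}" unfolding Ex2_def Ex1_def by auto
    moreover have "finite Ex" unfolding Ex_def using finE by simp
    ultimately show ?thesis unfolding Ex2_def by (metis card_Un_disjoint finite_Diff finite_Un add.assoc)
  qed
  have edge_form: "\<exists>u. e = {x, u} \<and> u \<noteq> x" if "e \<in> Ex" for e
  proof -
    have "e \<in> E" "x \<in> e" using that unfolding Ex_def by auto
    then have "\<exists>u w. e = {u, w} \<and> u \<noteq> w \<and> u \<in> insert x F \<and> w \<in> insert x F"
      using insert.prems unfolding graph_on_def by (rule_tac bspec) auto
    then obtain u w where uw: "e = {u, w}" "u \<noteq> w" by (elim exE conjE)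
    show ?thesis
    proof (cases "u = x")
      case True then show ?thesis using uw by auto
    next
      case False then have "w = x" using uw \<open>x \<in> e\<close> by auto
      then show ?thesis using uw by (intro exI[of _ u]) auto
    qed
  qed
  have finC: "finite {e \<in> E. card (e \<inter> A) = 1}" for A using finE by simp
  show ?case
  proof (cases "card Ex1 \<le> card Ex2")
    case True
    define A where "A = insert x A'"
    have "C' \<union> Ex2 \<subseteq> {e \<in> E. card (e \<inter> A) = 1}"
    proof
      fix e assume "e \<in> C' \<union> Ex2"
      then show "e \<in> {e \<in> E. card (e \<inter> A) = 1}"
      proof
        assume e: "e \<in> C'"
        then have "e \<inter> A = e \<inter> A'" unfolding C'_def E'_def A_def by auto
        then show ?thesis using e unfolding C'_def E'_def by auto
      next
        assume e: "e \<in> Ex2"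
        then obtain u where u: "e = {x, u}" "u \<noteq> x" using edge_form unfolding Ex2_def by blast
        have "u \<notin> A'" using e u unfolding Ex2_def Ex1_def by auto
        then have "e \<inter> A = {x}" unfolding u A_def using u by auto
        then show ?thesis using e unfolding Ex2_def Ex_def by auto
      qed
    qed
    moreover have "C' \<inter> Ex2 = {}" unfolding C'_def E'_def Ex2_def Ex_def by auto
    moreover have "finite C'" "finite Ex2" unfolding C'_def Ex2_def Ex_def E'_def using finE by auto
    ultimately have "card C' + card Ex2 \<le> card {e \<in> E. card (e \<inter> A) = 1}"
      by (metis card_Un_disjoint card_mono finC)
    then show ?thesis using A' cE True unfolding C'_def by (intro exI[of _ A]) linarith
  next
    case False
    define A where "A = A' - {x}"
    have "C' \<union> Ex1 \<subseteq> {e \<in> E. card (e \<inter> A) = 1}"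
    proof
      fix e assume "e \<in> C' \<union> Ex1"
      then show "e \<in> {e \<in> E. card (e \<inter> A) = 1}"
      proof
        assume e: "e \<in> C'"
        then have "e \<inter> A = e \<inter> A'" unfolding C'_def E'_def A_def by auto
        then show ?thesis using e unfolding C'_def E'_def by auto
      next
        assume e: "e \<in> Ex1"
        then obtain u where u: "e = {x, u}" "u \<noteq> x" using edge_form unfolding Ex1_def by blast
        have "u \<in> A'" using e u unfolding Ex1_def by auto
        then have "e \<inter> A = {u}" unfolding u A_def using u by auto
        then show ?thesis using e unfolding Ex1_def Ex_def by auto
      qed
    qed
    moreover have "C' \<inter> Ex1 = {}" unfolding C'_def E'_def Ex1_def Ex_def by auto
    moreover have "finite C'" "finite Ex1" unfolding C'_def Ex1_def Ex_def E'_def using finE by auto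
    ultimately have "card C' + card Ex1 \<le> card {e \<in> E. card (e \<inter> A) = 1}"
      by (metis card_Un_disjoint card_mono finC)
    then show ?thesis using A' cE False unfolding C'_def by (intro exI[of _ A]) linarith
  qed
qed

lemma bipartite_even:
  assumes cr: "\<forall>e\<in>H. card (e \<inter> A) = 1" and hc: "has_cycle H k"
  shows "even k"
proof -
  obtain F where "is_cycle_subgraph H k F" using hc unfolding has_cycle_def by (elim exE)
  then obtain vs where vs0: "length vs = k" "k \<ge> 3" "distinct vs" "F = cycle_edges vs" "F \<subseteq> H"
    unfolding is_cycle_subgraph_def by (elim exE conjE)
  then have vs: "length vs = k" "k \<ge> 3" "distinct vs" "cycle_edges vs \<subseteq> H" by simp_all
  have ne: "vs \<noteq> []" using vs by auto
  define w where "w = vs @ [hd vs]"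
  have ww: "walk H w" unfolding w_def using cycle_edges_subset_iff[OF ne] vs(4) by simp
  have lw: "length w = Suc k" unfolding w_def using vs by simp
  have wk: "w ! k = w ! 0"
  proof -
    have "w ! k = hd vs" unfolding w_def using vs(1) by (simp add: nth_append)
    also have "\<dots> = vs ! 0" using ne by (simp add: hd_conv_nth)
    also have "\<dots> = w ! 0" unfolding w_def using ne by (simp add: nth_append)
    finally show ?thesis .
  qed
  have step: "w ! i \<in> A \<longleftrightarrow> w ! Suc i \<notin> A" if i: "i < k" for i
  proof -
    have e: "{w ! i, w ! Suc i} \<in> H" using ww i lw unfolding walk_nth by simp
    have "w ! i \<noteq> w ! Suc i"
    proof (cases "Suc i < k")
      case True
      then have "w ! i = vs ! i" "w ! Suc i = vs ! Suc i" unfolding w_def using vs by (auto simp: nth_append)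
      moreover have "(vs ! i = vs ! Suc i) = (i = Suc i)"
        by (rule nth_eq_iff_index_eq) (use vs True in auto)
      ultimately show ?thesis by simp
    next
      case False
      then have "Suc i = k" using i by simp
      have "w ! 0 = vs ! 0" using ne unfolding w_def by (simp add: nth_append)
      then have "w ! Suc i = vs ! 0" using wk \<open>Suc i = k\<close> by simp
      moreover have "w ! i = vs ! i" using i vs(1) unfolding w_def by (simp add: nth_append)
      moreover have "(vs ! i = vs ! 0) = (i = 0)"
        by (rule nth_eq_iff_index_eq) (use vs i in auto)
      moreover have "i \<noteq> 0" using \<open>Suc i = k\<close> vs(2) by auto
      ultimately show ?thesis by simp
    qed
    moreover have "card ({w ! i, w ! Suc i} \<inter> A) = 1" by (rule bspec[OF cr e])
    ultimately show ?thesis by (rule card_cross_pair)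
  qed
  have par: "w ! i \<in> A \<longleftrightarrow> (w ! 0 \<in> A \<longleftrightarrow> even i)" if "i \<le> k" for i
    using that
  proof (induction i)
    case 0 then show ?case by simp
  next
    case (Suc i)
    then have "i < k" by simp
    then have "w ! i \<in> A \<longleftrightarrow> w ! Suc i \<notin> A" by (rule step)
    moreover have "w ! i \<in> A \<longleftrightarrow> (w ! 0 \<in> A \<longleftrightarrow> even i)" using Suc by simp
    moreover have "even (Suc i) \<longleftrightarrow> \<not> even i" by simp
    ultimately show ?case by blast
  qed
  show ?thesis using par[of k] wk by auto
qed

lemma doubleton_other: "{x, y} = {u, v} \<Longrightarrow> x = u \<Longrightarrow> y = v"
  by (metis doubleton_eq_iff)

lemma cyc_same_start:
  assumes dv: "distinct vs" and dw: "distinct ws" and lv: "length vs = L" and lw: "length ws = L"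
    and L3: "L \<ge> 3" and ce: "cycle_edges vs = cycle_edges ws"
    and e0: "vs ! 0 = ws ! 0" and e1: "vs ! 1 = ws ! 1"
  shows "vs = ws"
proof -
  have step: "vs ! (i + 2) = ws ! (i + 2)"
    if i2: "i + 2 < L" and h0: "vs ! i = ws ! i" and h1: "vs ! (i + 1) = ws ! (i + 1)" for i
  proof -
    have "(i + 1 + 1) mod L = i + 2" using i2 by simp
    then have "{ws ! (i + 1), ws ! (i + 2)} \<in> cycle_edges ws"
      unfolding cycle_edges_def using i2 lw by (auto intro!: exI[of _ "i + 1"])
    then have "{ws ! (i + 1), ws ! (i + 2)} \<in> cycle_edges vs" using ce by simp
    then obtain j where j: "j < L" "{ws ! (i + 1), ws ! (i + 2)} = {vs ! j, vs ! ((j + 1) mod L)}"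
      unfolding cycle_edges_def using lv by auto
    have ml: "(j + 1) mod L < L" using L3 by simp
    have vi1: "ws ! (i + 1) = vs ! (i + 1)" using h1 by simp
    show ?thesis
    proof (cases "vs ! (i + 1) = vs ! j")
      case True
      then have "i + 1 = j" using nth_eq_iff_index_eq[OF dv] i2 j(1) lv by auto
      then have "ws ! (i + 2) = vs ! ((j + 1) mod L)" using j(2) vi1 True doubleton_other by metis
      also have "(j + 1) mod L = i + 2" using \<open>i + 1 = j\<close> i2 by simp
      finally show ?thesis by simp
    next
      case False
      then have "ws ! (i + 1) = vs ! ((j + 1) mod L)" using j(2) vi1 by (metis doubleton_eq_iff)
      then have "(j + 1) mod L = i + 1" using nth_eq_iff_index_eq[OF dv] i2 ml lv vi1 by auto
      then have "j = i"
        using j(1) by (metis add_right_cancel mod_less mod_self nat_neq_iff Suc_eq_plus1 Suc_leI le_neq_implies_less zero_neq_one add_eq_0_iff_both_eq_0 order_less_irrefl)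
      then have "ws ! (i + 2) = vs ! i" using j(2) vi1 \<open>(j + 1) mod L = i + 1\<close> by (metis doubleton_eq_iff)
      then have "ws ! (i + 2) = ws ! i" using h0 by simp
      then have "i + 2 = i" using nth_eq_iff_index_eq[OF dw] i2 lw by auto
      then show ?thesis by simp
    qed
  qed
  have all: "i + 1 < L \<longrightarrow> vs ! i = ws ! i \<and> vs ! (i + 1) = ws ! (i + 1)" for i
  proof (induction i)
    case 0 then show ?case using e0 e1 by simp
  next
    case (Suc i)
    show ?case
    proof
      assume "Suc i + 1 < L"
      then have "vs ! i = ws ! i" "vs ! (i + 1) = ws ! (i + 1)" using Suc by auto
      moreover have "vs ! (i + 2) = ws ! (i + 2)" using step \<open>Suc i + 1 < L\<close> calculation by simp
      ultimately show "vs ! Suc i = ws ! Suc i \<and> vs ! (Suc i + 1) = ws ! (Suc i + 1)" by simp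
    qed
  qed
  show ?thesis
  proof (rule nth_equalityI)
    show "length vs = length ws" using lv lw by simp
    fix i assume "i < length vs"
    then show "vs ! i = ws ! i"
    proof (cases "i + 1 < L")
      case True then show ?thesis using all by blast
    next
      case False
      then have "i = L - 1" "L - 1 = (L - 2) + 1" using \<open>i < length vs\<close> lv L3 by auto
      then show ?thesis using all[of "L - 2"] L3 by auto
    qed
  qed
qed

lemma union_cycle_edges: "vs \<noteq> [] \<Longrightarrow> \<Union> (cycle_edges vs) = set vs"
proof
  assume ne: "vs \<noteq> []"
  show "\<Union> (cycle_edges vs) \<subseteq> set vs"
    unfolding cycle_edges_def using ne by auto
  show "set vs \<subseteq> \<Union> (cycle_edges vs)"
  proof
    fix x assume "x \<in> set vs"
    then obtain i where "i < length vs" "x = vs ! i" by (auto simp: in_set_conv_nth)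
    then have "x \<in> {vs ! i, vs ! ((i + 1) mod length vs)}" "{vs ! i, vs ! ((i + 1) mod length vs)} \<in> cycle_edges vs"
      unfolding cycle_edges_def by auto
    then show "x \<in> \<Union> (cycle_edges vs)" by blast
  qed
qed

lemma paths_props:
  assumes "P \<in> paths H W a l"
  shows "length P = Suc l" "hd P = a" "distinct P" "walk H P" "set P \<subseteq> W" "P \<noteq> []"
  using assms unfolding paths_def by auto

lemma internally_disjoint:
  assumes P: "P \<in> paths H W a l" and Q: "Q \<in> paths H W a l" and la: "last P = last Q"
    and ne: "P \<noteq> Q" and nocyc: "\<forall>m. 3 \<le> m \<and> m \<le> 2 * l - 2 \<longrightarrow> \<not> has_cycle H m"
  shows "set P \<inter> set Q \<subseteq> {hd P, last P}"
proof
  fix z assume z: "z \<in> set P \<inter> set Q"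
  show "z \<in> {hd P, last P}"
  proof (rule ccontr)
    assume zn: "z \<notin> {hd P, last P}"
    note p = paths_props[OF P] and q = paths_props[OF Q]
    obtain i where i: "i < Suc l" "P ! i = z" using z p(1) by (auto simp: in_set_conv_nth)
    obtain i' where i': "i' < Suc l" "Q ! i' = z" using z q(1) by (auto simp: in_set_conv_nth)
    have hdP: "hd P = P ! 0" "hd Q = Q ! 0" using p q by (auto simp: hd_conv_nth)
    have laP: "last P = P ! l" "last Q = Q ! l" using p q by (auto simp: last_conv_nth)
    have zhd: "z \<noteq> hd P" "z \<noteq> last P" using zn by auto
    have i0: "i \<noteq> 0" "i \<noteq> l"
    proof -
      show "i \<noteq> 0" proof assume "i = 0" then show False using i(2) hdP zhd by simp qed
      show "i \<noteq> l" proof assume "i = l" then show False using i(2) laP zhd by simp qed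
    qed
    have i'0: "i' \<noteq> 0" "i' \<noteq> l"
    proof -
      show "i' \<noteq> 0" proof assume "i' = 0" then show False using i'(2) hdP zhd p(2) q(2) by simp qed
      show "i' \<noteq> l" proof assume "i' = l" then show False using i'(2) laP zhd la by simp qed
    qed
    have nocyc': False if "3 \<le> m" "m \<le> 2 * l - 2" "has_cycle H m" for m
      using nocyc that by blast
    define P1 where "P1 = take (Suc i) P"
    define Q1 where "Q1 = take (Suc i') Q"
    have lP1: "length P1 = Suc i" "length Q1 = Suc i'" unfolding P1_def Q1_def using i i' p q by auto
    have "P1 = Q1"
    proof (rule ccontr)
      assume "P1 \<noteq> Q1"
      moreover have "walk H P1" "walk H Q1" unfolding P1_def Q1_def using p q walk_take by auto
      moreover have "distinct P1" "distinct Q1" unfolding P1_def Q1_def using p q by auto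
      moreover have "P1 \<noteq> []" "Q1 \<noteq> []" using lP1 by auto
      moreover have "hd P1 = hd Q1" unfolding P1_def Q1_def using p q by auto
      moreover have "last P1 = last Q1" unfolding P1_def Q1_def using i i' p(1) q(1)
        by (simp add: last_conv_nth take_Suc_conv_app_nth)
      ultimately obtain m where m: "3 \<le> m" "m \<le> length P1 + length Q1 - 2" "has_cycle H m"
        using two_paths_cycle[of H P1 Q1] by blast
      moreover have "length P1 + length Q1 - 2 \<le> 2 * l - 2" using lP1 i i' i0 i'0 by auto
      then have "m \<le> 2 * l - 2" using m(2) by linarith
      then show False using nocyc' m(1,3) by blast
    qed
    then have ii: "i = i'" using lP1 by simp
    define P2 where "P2 = drop i P"
    define Q2 where "Q2 = drop i Q"
    have lP2: "length P2 = Suc l - i" "length Q2 = Suc l - i" unfolding P2_def Q2_def using p q by auto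
    have "P2 = Q2"
    proof (rule ccontr)
      assume "P2 \<noteq> Q2"
      moreover have "walk H P2" "walk H Q2" unfolding P2_def Q2_def using p q walk_drop by auto
      moreover have "distinct P2" "distinct Q2" unfolding P2_def Q2_def using p q by auto
      moreover have "P2 \<noteq> []" "Q2 \<noteq> []" using lP2 i by auto
      moreover have "hd P2 = hd Q2" unfolding P2_def Q2_def using i i' ii p(1) q(1)
        by (simp add: hd_drop_conv_nth)
      moreover have "last P2 = last Q2" unfolding P2_def Q2_def using i p(1) q(1) la by simp
      ultimately obtain m where m: "3 \<le> m" "m \<le> length P2 + length Q2 - 2" "has_cycle H m"
        using two_paths_cycle[of H P2 Q2] by blast
      moreover have "length P2 + length Q2 - 2 \<le> 2 * l - 2" using lP2 i i0 by auto
      then have "m \<le> 2 * l - 2" using m(2) by linarith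
      then show False using nocyc' m(1,3) by blast
    qed
    have "P = take (Suc i) P @ drop (Suc i) P" by simp
    also have "drop (Suc i) P = tl P2" unfolding P2_def by (simp add: drop_Suc tl_drop)
    also have "tl P2 = tl Q2" using \<open>P2 = Q2\<close> by simp
    also have "take (Suc i) P = take (Suc i) Q" using \<open>P1 = Q1\<close> ii unfolding P1_def Q1_def by simp
    also have "take (Suc i) Q @ tl Q2 = Q" unfolding Q2_def by (metis append_take_drop_id drop_Suc tl_drop)
    finally show False using ne by simp
  qed
qed

lemma pair_vs:
  assumes P: "P \<in> paths H W a l" and Q: "Q \<in> paths H W a l" and la: "last P = last Q"
    and ne: "P \<noteq> Q" and nocyc: "\<forall>m. 3 \<le> m \<and> m \<le> 2 * l - 2 \<longrightarrow> \<not> has_cycle H m"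
    and l2: "l \<ge> 2"
  shows "distinct (P @ rev (butlast (tl Q))) \<and> walk H ((P @ rev (butlast (tl Q))) @ [hd (P @ rev (butlast (tl Q)))])
    \<and> length (P @ rev (butlast (tl Q))) = 2 * l"
proof -
  note p = paths_props[OF P] and q = paths_props[OF Q]
  have "distinct (P @ rev (butlast (tl Q))) \<and> walk H ((P @ rev (butlast (tl Q))) @ [hd (P @ rev (butlast (tl Q)))])
    \<and> length (P @ rev (butlast (tl Q))) = length P + length Q - 2"
    by (rule two_paths_vs) (use p q la internally_disjoint[OF P Q la ne nocyc] l2 in auto)
  then show ?thesis using p(1) q(1) by simp
qed

definition Pab :: "nat set set \<Rightarrow> nat set \<Rightarrow> nat \<Rightarrow> nat \<Rightarrow> nat \<Rightarrow> nat list set" where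
  "Pab H W l a b = {P \<in> paths H W a l. last P = b}"

definition PPs :: "nat set set \<Rightarrow> nat set \<Rightarrow> nat \<Rightarrow> (nat list \<times> nat list) set" where
  "PPs H W l = (\<Union>ab\<in>W \<times> W. Pab H W l (fst ab) (snd ab) \<times> Pab H W l (fst ab) (snd ab)
                   - (\<lambda>x. (x, x)) ` Pab H W l (fst ab) (snd ab))"

lemma cyc_vertices:
  assumes "is_cycle_subgraph H L F"
  shows "finite (\<Union>F) \<and> card (\<Union>F) \<le> L"
proof -
  obtain ws where ws: "length ws = L" "L \<ge> 3" "F = cycle_edges ws"
    using assms unfolding is_cycle_subgraph_def by (elim exE conjE) simp
  have "ws \<noteq> []" using ws by auto
  then have "\<Union>F = set ws" using ws union_cycle_edges by simp
  then show ?thesis using ws card_length[of ws] by simp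
qed

lemma pp_le:
  assumes finH: "finite H" and l2: "l \<ge> 2"
    and nocyc: "\<forall>m. 3 \<le> m \<and> m \<le> 2 * l - 2 \<longrightarrow> \<not> has_cycle H m"
  shows "card (PPs H W l) \<le> num_cycles H (2 * l) * (2 * l) ^ 2"
proof -
  define Cyc where "Cyc = {F. is_cycle_subgraph H (2 * l) F}"
  define vsf where "vsf = (\<lambda>pq::nat list \<times> nat list. fst pq @ rev (butlast (tl (snd pq))))"
  define psi where "psi = (\<lambda>pq. (cycle_edges (vsf pq), (fst pq ! 0, fst pq ! 1)))"
  have mem: "\<exists>a b. P \<in> paths H W a l \<and> Q \<in> paths H W a l \<and> last P = b \<and> last Q = b \<and> P \<noteq> Q"
    if "(P, Q) \<in> PPs H W l" for P Q
    using that unfolding PPs_def Pab_def by auto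
  have vsprops: "distinct (vsf (P, Q)) \<and> walk H (vsf (P, Q) @ [hd (vsf (P, Q))]) \<and> length (vsf (P, Q)) = 2 * l"
    if PQ: "(P, Q) \<in> PPs H W l" for P Q
  proof -
    obtain a b where ab: "P \<in> paths H W a l" "Q \<in> paths H W a l" "last P = b" "last Q = b" "P \<noteq> Q"
      using mem[OF PQ] by blast
    show ?thesis unfolding vsf_def using pair_vs[OF ab(1,2) _ ab(5) nocyc l2] ab(3,4) by simp
  qed
  have vs01: "vsf (P, Q) ! 0 = P ! 0 \<and> vsf (P, Q) ! 1 = P ! 1" if PQ: "(P, Q) \<in> PPs H W l" for P Q
  proof -
    obtain a b where ab: "P \<in> paths H W a l" "Q \<in> paths H W a l" "last P = b" "last Q = b" "P \<noteq> Q"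
      using mem[OF PQ] by blast
    have "length P = Suc l" using paths_props(1)[OF ab(1)] .
    then show ?thesis unfolding vsf_def using l2 by (simp add: nth_append)
  qed
  have inCyc: "cycle_edges (vsf pq) \<in> Cyc" if "pq \<in> PPs H W l" for pq
  proof -
    obtain P Q where pq: "pq = (P, Q)" by (cases pq)
    have v: "distinct (vsf pq)" "walk H (vsf pq @ [hd (vsf pq)])" "length (vsf pq) = 2 * l"
      using vsprops[of P Q] that pq by auto
    have "vsf pq \<noteq> []" using v(3) l2 by auto
    then have "cycle_edges (vsf pq) \<subseteq> H" using v(2) cycle_edges_subset_iff by blast
    then show ?thesis unfolding Cyc_def is_cycle_subgraph_def using v l2 by auto
  qed
  have img: "psi ` PPs H W l \<subseteq> (SIGMA F:Cyc. \<Union>F \<times> \<Union>F)"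
  proof
    fix y assume "y \<in> psi ` PPs H W l"
    then obtain P Q where pq: "(P, Q) \<in> PPs H W l" "y = psi (P, Q)" by auto
    have v: "distinct (vsf (P, Q))" "length (vsf (P, Q)) = 2 * l" using vsprops[OF pq(1)] by auto
    then have ne: "vsf (P, Q) \<noteq> []" using l2 by auto
    have "vsf (P, Q) ! 0 \<in> set (vsf (P, Q))" "vsf (P, Q) ! 1 \<in> set (vsf (P, Q))" using v l2 by auto
    then have "P ! 0 \<in> \<Union>(cycle_edges (vsf (P, Q)))" "P ! 1 \<in> \<Union>(cycle_edges (vsf (P, Q)))"
      using vs01[OF pq(1)] union_cycle_edges[OF ne] by auto
    then show "y \<in> (SIGMA F:Cyc. \<Union>F \<times> \<Union>F)" using inCyc[OF pq(1)] pq(2) unfolding psi_def by auto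
  qed
  have inj: "inj_on psi (PPs H W l)"
  proof
    fix pq1 pq2 assume in1: "pq1 \<in> PPs H W l" and in2: "pq2 \<in> PPs H W l" and eq: "psi pq1 = psi pq2"
    obtain P Q where pq1: "pq1 = (P, Q)" by (cases pq1)
    obtain P' Q' where pq2: "pq2 = (P', Q')" by (cases pq2)
    have i1: "(P, Q) \<in> PPs H W l" and i2: "(P', Q') \<in> PPs H W l" using in1 in2 pq1 pq2 by auto
    have v1: "distinct (vsf (P, Q))" "length (vsf (P, Q)) = 2 * l" using vsprops[OF i1] by auto
    have v2: "distinct (vsf (P', Q'))" "length (vsf (P', Q')) = 2 * l" using vsprops[OF i2] by auto
    have ce: "cycle_edges (vsf (P, Q)) = cycle_edges (vsf (P', Q'))" using eq pq1 pq2 unfolding psi_def by simp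
    have e01: "P ! 0 = P' ! 0" "P ! 1 = P' ! 1" using eq pq1 pq2 unfolding psi_def by auto
    have "vsf (P, Q) = vsf (P', Q')"
    proof (rule cyc_same_start[OF v1(1) v2(1) v1(2) v2(2) _ ce])
      show "3 \<le> 2 * l" using l2 by simp
      show "vsf (P, Q) ! 0 = vsf (P', Q') ! 0" "vsf (P, Q) ! 1 = vsf (P', Q') ! 1"
        using vs01[OF i1] vs01[OF i2] e01 by auto
    qed
    obtain a b where ab: "P \<in> paths H W a l" "Q \<in> paths H W a l" "last P = b" "last Q = b" "P \<noteq> Q"
      using mem[OF i1] by blast
    obtain a' b' where ab': "P' \<in> paths H W a' l" "Q' \<in> paths H W a' l" "last P' = b'" "last Q' = b'" "P' \<noteq> Q'"
      using mem[OF i2] by blast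
    have lens: "length P = Suc l" "length P' = Suc l" "length Q = Suc l" "length Q' = Suc l"
      using paths_props(1) ab ab' by auto
    have "P = P'"
    proof -
      have "P = take (Suc l) (vsf (P, Q))" unfolding vsf_def using lens by simp
      also have "\<dots> = take (Suc l) (vsf (P', Q'))" using \<open>vsf (P, Q) = vsf (P', Q')\<close> by simp
      also have "\<dots> = P'" unfolding vsf_def using lens by simp
      finally show ?thesis .
    qed
    have bt: "butlast (tl Q) = butlast (tl Q')"
    proof -
      have "rev (butlast (tl Q)) = drop (Suc l) (vsf (P, Q))" unfolding vsf_def using lens by simp
      also have "\<dots> = drop (Suc l) (vsf (P', Q'))" using \<open>vsf (P, Q) = vsf (P', Q')\<close> by simp
      also have "\<dots> = rev (butlast (tl Q'))" unfolding vsf_def using lens by simp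
      finally show ?thesis by simp
    qed
    have hq: "hd Q = hd Q'" using paths_props(2) ab ab' \<open>P = P'\<close> by metis
    have lq: "last Q = last Q'" using ab ab' \<open>P = P'\<close> by simp
    have recon: "X = hd X # butlast (tl X) @ [last X]" if "length X = Suc l" for X :: "nat list"
    proof -
      have "X \<noteq> []" using that by auto
      moreover have "tl X \<noteq> []"
      proof
        assume "tl X = []"
        then have "length (tl X) = 0" by simp
        moreover have "length (tl X) = l" using that by simp
        ultimately show False using l2 by simp
      qed
      ultimately have "X \<noteq> []" "tl X \<noteq> []" by auto
      then show ?thesis by (metis append_butlast_last_id hd_Cons_tl last_tl)
    qed
    have "Q = Q'" using recon[OF lens(3)] recon[OF lens(4)] hq lq bt by metis
    then show "pq1 = pq2" using pq1 pq2 \<open>P = P'\<close> by simp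
  qed
  have finCyc: "finite Cyc"
  proof -
    have "Cyc \<subseteq> Pow H" unfolding Cyc_def is_cycle_subgraph_def by auto
    then show ?thesis using finH by (simp add: finite_subset)
  qed
  have finU: "finite (\<Union>F)" "card (\<Union>F) \<le> 2 * l" if "F \<in> Cyc" for F
    using cyc_vertices that unfolding Cyc_def by auto
  have finS: "finite (SIGMA F:Cyc. \<Union>F \<times> \<Union>F)" using finCyc finU by auto
  have "card (PPs H W l) \<le> card (SIGMA F:Cyc. \<Union>F \<times> \<Union>F)"
    using card_inj_on_le[OF inj img finS] .
  also have "\<dots> = (\<Sum>F\<in>Cyc. card (\<Union>F \<times> \<Union>F))" using finCyc finU by (simp add: card_SigmaI)
  also have "\<dots> \<le> (\<Sum>F\<in>Cyc. (2 * l) ^ 2)"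
  proof (rule sum_mono)
    fix F assume "F \<in> Cyc"
    then have "card (\<Union>F \<times> \<Union>F) = card (\<Union>F) * card (\<Union>F)" by (simp add: card_cartesian_product)
    also have "\<dots> \<le> (2 * l) * (2 * l)" by (rule mult_le_mono[OF finU(2)[OF \<open>F \<in> Cyc\<close>] finU(2)[OF \<open>F \<in> Cyc\<close>]])
    finally show "card (\<Union>F \<times> \<Union>F) \<le> (2 * l) ^ 2" by (simp add: power2_eq_square)
  qed
  also have "\<dots> = num_cycles H (2 * l) * (2 * l) ^ 2" unfolding num_cycles_def Cyc_def by simp
  finally show ?thesis .
qed

lemma cauchy_sum:
  fixes f :: "'a \<Rightarrow> real"
  assumes "finite I"
  shows "(\<Sum>i\<in>I. f i) ^ 2 \<le> real (card I) * (\<Sum>i\<in>I. f i ^ 2)"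
proof (cases "I = {}")
  case True then show ?thesis by simp
next
  case False
  define N where "N = real (card I)"
  have N0: "N > 0" unfolding N_def using False assms by (simp add: card_gt_0_iff)
  define S where "S = (\<Sum>i\<in>I. f i)"
  define m where "m = S / N"
  have "0 \<le> (\<Sum>i\<in>I. (f i - m) ^ 2)" by (simp add: sum_nonneg)
  also have "\<dots> = (\<Sum>i\<in>I. f i ^ 2 - 2 * m * f i + m ^ 2)"
    by (rule sum.cong) (simp_all add: power2_eq_square algebra_simps)
  also have "\<dots> = (\<Sum>i\<in>I. f i ^ 2) - 2 * m * S + N * m ^ 2"
    unfolding S_def N_def by (simp add: sum.distrib sum_subtractf sum_distrib_left)
  also have "\<dots> = (\<Sum>i\<in>I. f i ^ 2) - S ^ 2 / N"
    unfolding m_def using N0 by (simp add: power2_eq_square field_simps)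
  finally have "S ^ 2 / N \<le> (\<Sum>i\<in>I. f i ^ 2)" by simp
  then show ?thesis using N0 unfolding S_def N_def by (simp add: divide_le_eq mult.commute)
qed

lemma finite_Pab: "finite W \<Longrightarrow> finite (Pab H W l a b)"
  unfolding Pab_def using finite_paths by simp

lemma card_PPs:
  assumes finW: "finite W"
  shows "real (card (PPs H W l)) = (\<Sum>ab\<in>W \<times> W. real (card (Pab H W l (fst ab) (snd ab))) ^ 2)
            - (\<Sum>ab\<in>W \<times> W. real (card (Pab H W l (fst ab) (snd ab))))"
proof -
  define A where "A = (\<lambda>ab. Pab H W l (fst ab) (snd ab) \<times> Pab H W l (fst ab) (snd ab)
                   - (\<lambda>x. (x, x)) ` Pab H W l (fst ab) (snd ab))"
  have finA: "\<forall>ab\<in>W \<times> W. finite (A ab)" unfolding A_def using finite_Pab[OF finW] by auto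
  have disj: "\<forall>i\<in>W \<times> W. \<forall>j\<in>W \<times> W. i \<noteq> j \<longrightarrow> A i \<inter> A j = {}"
  proof (intro ballI impI)
    fix i j assume "i \<in> W \<times> W" "j \<in> W \<times> W" "i \<noteq> j"
    show "A i \<inter> A j = {}"
    proof (rule ccontr)
      assume "A i \<inter> A j \<noteq> {}"
      then obtain P Q where "(P, Q) \<in> A i" "(P, Q) \<in> A j" by auto
      then have "P \<in> Pab H W l (fst i) (snd i)" "P \<in> Pab H W l (fst j) (snd j)" unfolding A_def by auto
      then have "hd P = fst i" "hd P = fst j" "last P = snd i" "last P = snd j"
        unfolding Pab_def paths_def by auto
      then show False using \<open>i \<noteq> j\<close> by (simp add: prod_eq_iff)
    qed
  qed
  have "card (PPs H W l) = (\<Sum>ab\<in>W \<times> W. card (A ab))"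
    unfolding PPs_def A_def[symmetric] using card_UN_disjoint[OF _ finA disj] finW by simp
  moreover have "card (A ab) = card (Pab H W l (fst ab) (snd ab)) * card (Pab H W l (fst ab) (snd ab))
      - card (Pab H W l (fst ab) (snd ab))" for ab
  proof -
    let ?X = "Pab H W l (fst ab) (snd ab)"
    have "card (A ab) = card (?X \<times> ?X) - card ((\<lambda>x. (x, x)) ` ?X)"
      unfolding A_def by (rule card_Diff_subset) (use finite_Pab[OF finW] in auto)
    moreover have "card ((\<lambda>x. (x, x)) ` ?X) = card ?X" by (rule card_image) (simp add: inj_on_def)
    ultimately show ?thesis by (simp add: card_cartesian_product)
  qed
  ultimately have "card (PPs H W l) = (\<Sum>ab\<in>W \<times> W. card (Pab H W l (fst ab) (snd ab)) * card (Pab H W l (fst ab) (snd ab))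
      - card (Pab H W l (fst ab) (snd ab)))" by simp
  then have "real (card (PPs H W l)) = (\<Sum>ab\<in>W \<times> W. real (card (Pab H W l (fst ab) (snd ab)) * card (Pab H W l (fst ab) (snd ab))
      - card (Pab H W l (fst ab) (snd ab))))" by simp
  also have "\<dots> = (\<Sum>ab\<in>W \<times> W. real (card (Pab H W l (fst ab) (snd ab))) ^ 2 - real (card (Pab H W l (fst ab) (snd ab))))"
  proof (rule sum.cong)
    fix ab
    let ?p = "card (Pab H W l (fst ab) (snd ab))"
    have "?p \<le> ?p * ?p" by (cases ?p) auto
    then show "real (?p * ?p - ?p) = real ?p ^ 2 - real ?p" by (simp add: of_nat_diff power2_eq_square)
  qed simp
  also have "\<dots> = (\<Sum>ab\<in>W \<times> W. real (card (Pab H W l (fst ab) (snd ab))) ^ 2)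
            - (\<Sum>ab\<in>W \<times> W. real (card (Pab H W l (fst ab) (snd ab))))" by (simp add: sum_subtractf)
  finally show ?thesis .
qed

lemma sum_Pab:
  assumes finW: "finite W"
  shows "(\<Sum>ab\<in>W \<times> W. real (card (Pab H W l (fst ab) (snd ab)))) = (\<Sum>a\<in>W. real (card (paths H W a l)))"
proof -
  have each: "card (paths H W a l) = (\<Sum>b\<in>W. card (Pab H W l a b))" for a
  proof -
    have "paths H W a l = (\<Union>b\<in>W. Pab H W l a b)"
    proof
      show "paths H W a l \<subseteq> (\<Union>b\<in>W. Pab H W l a b)"
      proof
        fix P assume P: "P \<in> paths H W a l"
        then have "last P \<in> W" using paths_props[OF P] last_in_set by blast
        then show "P \<in> (\<Union>b\<in>W. Pab H W l a b)" using P unfolding Pab_def by auto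
      qed
      show "(\<Union>b\<in>W. Pab H W l a b) \<subseteq> paths H W a l" unfolding Pab_def by auto
    qed
    moreover have "card (\<Union>b\<in>W. Pab H W l a b) = (\<Sum>b\<in>W. card (Pab H W l a b))"
      by (rule card_UN_disjoint) (use finW finite_Pab[OF finW] in \<open>auto simp: Pab_def\<close>)
    ultimately show ?thesis by simp
  qed
  have "(\<Sum>ab\<in>W \<times> W. real (card (Pab H W l (fst ab) (snd ab)))) = (\<Sum>a\<in>W. \<Sum>b\<in>W. real (card (Pab H W l a b)))"
    by (simp add: sum.cartesian_product case_prod_beta)
  also have "\<dots> = (\<Sum>a\<in>W. real (card (paths H W a l)))" using each by simp
  finally show ?thesis .
qed

lemma real_key:
  fixes S w x :: real
  assumes w0: "w > 0" and Sx: "S \<ge> w * x" and xw: "x \<ge> 2 * w"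
  shows "S ^ 2 / w ^ 2 - S \<ge> x ^ 2 / 2"
proof -
  have x0: "x \<ge> 0" using xw w0 by simp
  have S2: "S \<ge> 2 * w ^ 2"
  proof -
    have "w * x \<ge> w * (2 * w)" using xw w0 by (intro mult_left_mono) auto
    then show ?thesis using Sx by (simp add: power2_eq_square)
  qed
  have S0: "S \<ge> 0" using S2 by (smt (verit) zero_le_power2)
  define y where "y = S / w ^ 2"
  have w2: "w ^ 2 > 0" using w0 by simp
  have y2: "y \<ge> 2" unfolding y_def using S2 w2 by (simp add: le_divide_eq)
  have "S ^ 2 / w ^ 2 - S = S * (y - 1)" unfolding y_def using w2 by (simp add: power2_eq_square field_simps)
  also have "\<dots> \<ge> S * (y / 2)" using y2 S0 by (intro mult_left_mono) auto
  finally have a: "S ^ 2 / w ^ 2 - S \<ge> S * y / 2" by simp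
  have "S * y / 2 = S ^ 2 / (2 * w ^ 2)" unfolding y_def using w2 by (simp add: power2_eq_square field_simps)
  also have "S ^ 2 \<ge> (w * x) ^ 2" using Sx w0 x0 by (intro power_mono) auto
  then have "S ^ 2 / (2 * w ^ 2) \<ge> (w * x) ^ 2 / (2 * w ^ 2)" using w2 by (intro divide_right_mono) auto
  moreover have "(w * x) ^ 2 / (2 * w ^ 2) = x ^ 2 / 2" using w2 by (simp add: power_mult_distrib field_simps)
  ultimately show ?thesis using a \<open>S * y / 2 = S ^ 2 / (2 * w ^ 2)\<close> by linarith
qed

lemma lower_count:
  assumes finW: "finite W" and Wne: "W \<noteq> {}" and loop: "\<forall>x. {x} \<notin> H" and finH: "finite H"
    and deg: "\<forall>x\<in>W. real (card (nbr H W x)) \<ge> d" and d1: "d \<ge> 1" and l2: "l \<ge> 2"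
    and nocyc: "\<forall>m. 3 \<le> m \<and> m \<le> 2 * l - 1 \<longrightarrow> \<not> has_cycle H m"
    and big: "(d - 1) ^ l \<ge> 2 * real (card W)"
  shows "(d - 1) ^ (2 * l) / 2 \<le> real (num_cycles H (2 * l)) * real ((2 * l) ^ 2)"
proof -
  define w where "w = real (card W)"
  define x where "x = (d - 1) ^ l"
  define S where "S = (\<Sum>a\<in>W. real (card (paths H W a l)))"
  define T where "T = (\<Sum>ab\<in>W \<times> W. real (card (Pab H W l (fst ab) (snd ab))) ^ 2)"
  have w0: "w > 0" unfolding w_def using finW Wne by (simp add: card_gt_0_iff)
  have Sx: "S \<ge> w * x"
  proof -
    have "(\<Sum>a\<in>W. x) \<le> S" unfolding S_def x_def
    proof (rule sum_mono)
      fix a assume a: "a \<in> W"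
      show "(d - 1) ^ l \<le> real (card (paths H W a l))"
        by (rule path_count[OF finW a loop deg d1]) (use nocyc in auto)
    qed
    then show ?thesis unfolding w_def by simp
  qed
  have sumP: "(\<Sum>ab\<in>W \<times> W. real (card (Pab H W l (fst ab) (snd ab)))) = S"
    unfolding S_def by (rule sum_Pab[OF finW])
  have cs: "S ^ 2 \<le> w ^ 2 * T"
  proof -
    have "S ^ 2 \<le> real (card (W \<times> W)) * T"
      unfolding T_def sumP[symmetric] by (rule cauchy_sum) (simp add: finW)
    moreover have "real (card (W \<times> W)) = w ^ 2" unfolding w_def by (simp add: card_cartesian_product power2_eq_square)
    ultimately show ?thesis by simp
  qed
  have "real (card (PPs H W l)) = T - S" unfolding T_def using card_PPs[OF finW] sumP by simp
  also have "T - S \<ge> S ^ 2 / w ^ 2 - S"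
  proof -
    have "S ^ 2 / w ^ 2 \<le> T" using cs w0 by (simp add: divide_le_eq mult.commute)
    then show ?thesis by simp
  qed
  moreover have "S ^ 2 / w ^ 2 - S \<ge> x ^ 2 / 2"
    by (rule real_key[OF w0 Sx]) (use big in \<open>simp add: x_def w_def\<close>)
  ultimately have "real (card (PPs H W l)) \<ge> x ^ 2 / 2" by linarith
  moreover have "card (PPs H W l) \<le> num_cycles H (2 * l) * (2 * l) ^ 2"
    by (rule pp_le[OF finH l2]) (use nocyc in auto)
  then have "real (card (PPs H W l)) \<le> real (num_cycles H (2 * l) * (2 * l) ^ 2)"
    by (simp only: of_nat_le_iff)
  then have "real (card (PPs H W l)) \<le> real (num_cycles H (2 * l)) * real ((2 * l) ^ 2)"
    by (simp only: of_nat_mult)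
  moreover have "x ^ 2 = (d - 1) ^ (2 * l)" unfolding x_def by (simp add: power_mult[symmetric] mult.commute)
  ultimately show ?thesis by linarith
qed

definition admissible :: "nat \<Rightarrow> nat \<Rightarrow> nat set set \<Rightarrow> bool" where
  "admissible l n E \<longleftrightarrow> simple_graph n E \<and> (\<forall>k. 3 \<le> k \<and> k \<le> 2 * l - 1 \<longrightarrow> \<not> has_cycle E k)"

lemma ex_set_eq: "{num_cycles E (2 * l) | E. simple_graph n E \<and> (\<forall>k. 3 \<le> k \<and> k \<le> 2 * l - 1 \<longrightarrow> \<not> has_cycle E k)}
    = (\<lambda>E. num_cycles E (2 * l)) ` {E. admissible l n E}"
  unfolding admissible_def by auto

lemma admissible_finite: "finite {E. admissible l n E}"
proof -
  have "{E. admissible l n E} \<subseteq> Pow (Pow {0..<n})"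
    unfolding admissible_def simple_graph_def by auto
  then show ?thesis by (rule finite_subset) simp
qed

lemma cycle_edges_ne: "vs \<noteq> [] \<Longrightarrow> cycle_edges vs \<noteq> {}"
  unfolding cycle_edges_def by auto

lemma admissible_empty: "admissible l n {}"
proof -
  have "\<not> has_cycle {} k" for k
  proof
    assume "has_cycle {} k"
    then obtain F where "is_cycle_subgraph {} k F" unfolding has_cycle_def by (elim exE)
    then obtain vs where vs: "length vs = k" "k \<ge> 3" "F = cycle_edges vs" "F \<subseteq> {}"
      unfolding is_cycle_subgraph_def by (elim exE conjE) simp
    then have "vs \<noteq> []" by auto
    then show False using vs cycle_edges_ne by auto
  qed
  then show ?thesis unfolding admissible_def simple_graph_def by auto
qed

lemma ex_ge: "admissible l n E \<Longrightarrow> num_cycles E (2 * l) \<le> ex_even_cycle l n"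
  unfolding ex_even_cycle_def ex_set_eq using admissible_finite by (intro Max_ge) auto

lemma ex_attained: "\<exists>E. admissible l n E \<and> ex_even_cycle l n = num_cycles E (2 * l)"
proof -
  have "ex_even_cycle l n \<in> (\<lambda>E. num_cycles E (2 * l)) ` {E. admissible l n E}"
    unfolding ex_even_cycle_def ex_set_eq using admissible_finite admissible_empty[of l n] by (intro Max_in) auto
  then show ?thesis by auto
qed

lemma ex_upper:
  assumes l3: "l \<ge> 3"
  shows "real (ex_even_cycle l n) \<le> 16 * (real n * (real n powr (1 / real (l - 1)) + 2)) ^ 2"
proof -
  obtain E where E: "admissible l n E" "ex_even_cycle l n = num_cycles E (2 * l)" using ex_attained by blast
  have sg: "simple_graph n E" and nc: "\<forall>k. 3 \<le> k \<and> k \<le> 2 * l - 1 \<longrightarrow> \<not> has_cycle E k"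
    using E(1) unfolding admissible_def by auto
  have "num_cycles E (2 * l) \<le> 16 * card E ^ 2"
    by (rule cyc_upper[OF sg]) (use l3 nc in auto)
  then have a: "real (ex_even_cycle l n) \<le> 16 * real (card E) ^ 2" using E(2)
    by (metis of_nat_le_iff of_nat_mult of_nat_numeral of_nat_power)
  have "real (card E) \<le> real n * (real n powr (1 / real (l - 1)) + 2)"
    by (rule moore[OF sg]) (use l3 nc in auto)
  then have "real (card E) ^ 2 \<le> (real n * (real n powr (1 / real (l - 1)) + 2)) ^ 2"
    by (intro power_mono) auto
  then show ?thesis using a by linarith
qed

lemma powr_root_pow:
  assumes "n > 0" "k \<ge> 1"
  shows "(real n powr (1 / real k)) ^ k = real n"
proof -
  have "(real n powr (1 / real k)) ^ k = (real n powr (1 / real k)) powr real k"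
    using assms by (simp add: powr_realpow)
  also have "\<dots> = real n" using assms by (simp add: powr_powr)
  finally show ?thesis .
qed

lemma ex_lower:
  assumes l3: "l \<ge> 3" and c0: "c > 0" and npos: "n > 0" and sg: "simple_graph n E"
    and cE: "real (card E) \<ge> c * real n powr (1 + 1 / real (l - 1))"
    and gir: "\<forall>k. has_cycle E k \<longrightarrow> k > 2 * (l - 1)"
    and t_def: "t = real n powr (1 / real (l - 1))"
    and T1: "c / 4 * t \<ge> 2" and T2: "(c / 8) ^ l * t \<ge> 2"
  shows "real (ex_even_cycle l n) \<ge> (c / 8) ^ (2 * l) / (8 * real l ^ 2) * t ^ (2 * l)"
proof -
  have t0: "t > 0" unfolding t_def using npos by simp
  have tk: "t ^ (l - 1) = real n" unfolding t_def by (rule powr_root_pow) (use npos l3 in auto)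
  have tl: "t ^ l = t * real n"
  proof -
    have "l = Suc (l - 1)" using l3 by simp
    then have "t ^ l = t * t ^ (l - 1)" by (metis power_Suc)
    then show ?thesis using tk by simp
  qed
  have ngraph: "graph_on {0..<n} E" by (rule simple_graph_on[OF sg])
  obtain A where A: "card E \<le> 2 * card {e \<in> E. card (e \<inter> A) = 1}"
    using maxcut[OF _ ngraph] by auto
  define H where "H = {e \<in> E. card (e \<inter> A) = 1}"
  have HE: "H \<subseteq> E" unfolding H_def by auto
  have sgH: "simple_graph n H" using sg HE unfolding simple_graph_def by auto
  have gH: "graph_on {0..<n} H" by (rule simple_graph_on[OF sgH])
  have finH: "finite H" using graph_on_finite[OF _ gH] by simp
  have nocyc: "\<forall>m. 3 \<le> m \<and> m \<le> 2 * l - 1 \<longrightarrow> \<not> has_cycle H m"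
  proof (intro allI impI notI)
    fix m assume m: "3 \<le> m \<and> m \<le> 2 * l - 1" and hc: "has_cycle H m"
    show False
    proof (cases "m \<le> 2 * (l - 1)")
      case True
      then show False using gir has_cycle_mono[OF hc HE] by auto
    next
      case False
      then have "m = 2 * l - 1" using m l3 by auto
      moreover have "even m" by (rule bipartite_even[of H A, OF _ hc]) (simp add: H_def)
      ultimately show False using l3 by auto
    qed
  qed
  have adm: "admissible l n H" unfolding admissible_def using sgH nocyc by simp
  define D where "D = c / 4 * t"
  have D0: "D \<ge> 0" unfolding D_def using c0 t0 by simp
  have npow: "real n powr (1 + 1 / real (l - 1)) = real n * t"
    unfolding t_def using npos by (simp add: powr_add)
  have bigH: "real (card H) > D * real (card {0..<n})"
  proof -
    have "real (card H) \<ge> real (card E) / 2" using A unfolding H_def by simp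
    also have "real (card E) / 2 \<ge> c / 2 * (real n * t)" using cE npow by simp
    finally have "real (card H) \<ge> c / 2 * (real n * t)" .
    moreover have "c / 2 * (real n * t) > D * real n" unfolding D_def using c0 t0 npos
      by (simp add: algebra_simps)
    ultimately show ?thesis by simp
  qed
  obtain W where W: "W \<subseteq> {0..<n}" "W \<noteq> {}" "\<forall>x\<in>W. real (card (nbr H W x)) > D"
    using mindeg[OF _ gH bigH D0] by auto
  have finW: "finite W" using W(1) finite_subset by blast
  have cardW: "real (card W) \<le> real n"
  proof -
    have "card W \<le> card {0..<n}" using W(1) by (intro card_mono) auto
    then show ?thesis by simp
  qed
  have D2: "D \<ge> 2" unfolding D_def using T1 .
  have hD: "D - 1 \<ge> D / 2" using D2 by simp
  have hD0: "D / 2 \<ge> 0" using D2 by simp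
  have big: "(D - 1) ^ l \<ge> 2 * real (card W)"
  proof -
    have "(D - 1) ^ l \<ge> (D / 2) ^ l" using hD hD0 by (intro power_mono) auto
    also have "(D / 2) ^ l = (c / 8) ^ l * t ^ l" unfolding D_def by (simp add: power_mult_distrib[symmetric])
    also have "\<dots> = ((c / 8) ^ l * t) * real n" using tl by simp
    also have "\<dots> \<ge> 2 * real n" using T2 npos by (intro mult_right_mono) auto
    finally show ?thesis using cardW by linarith
  qed
  have lc: "(D - 1) ^ (2 * l) / 2 \<le> real (num_cycles H (2 * l)) * real ((2 * l) ^ 2)"
  proof (rule lower_count[OF finW W(2) graph_on_loop[OF gH] finH _ _ _ nocyc big])
    show "\<forall>x\<in>W. D \<le> real (card (nbr H W x))" using W(3) by (simp add: less_imp_le)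
    show "1 \<le> D" using D2 by simp
    show "2 \<le> l" using l3 by simp
  qed
  have "(D - 1) ^ (2 * l) \<ge> (D / 2) ^ (2 * l)" using hD hD0 by (intro power_mono) auto
  also have "(D / 2) ^ (2 * l) = (c / 8) ^ (2 * l) * t ^ (2 * l)" unfolding D_def
    by (simp add: power_mult_distrib[symmetric])
  finally have "(c / 8) ^ (2 * l) * t ^ (2 * l) / 2 \<le> real (num_cycles H (2 * l)) * real ((2 * l) ^ 2)"
    using lc by linarith
  moreover have "real ((2 * l) ^ 2) = 4 * real l ^ 2" by (simp add: power2_eq_square)
  moreover have lpos: "real l > 0" using l3 by simp
  ultimately have "(c / 8) ^ (2 * l) * t ^ (2 * l) / 2 \<le> real (num_cycles H (2 * l)) * (4 * real l ^ 2)"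
    by simp
  then have "(c / 8) ^ (2 * l) * t ^ (2 * l) / (8 * real l ^ 2) \<le> real (num_cycles H (2 * l))"
    using lpos by (simp add: field_simps)
  moreover have "real (num_cycles H (2 * l)) \<le> real (ex_even_cycle l n)"
    using ex_ge[OF adm] by simp
  ultimately show ?thesis by (simp add: field_simps)
qed

lemma ev_real_ge: "eventually (\<lambda>n::nat. real n \<ge> X) sequentially"
proof -
  have "eventually (\<lambda>n::nat. nat \<lceil>X\<rceil> \<le> n) sequentially" by (rule eventually_ge_at_top)
  then show ?thesis
  proof (rule eventually_mono)
    fix n :: nat assume "nat \<lceil>X\<rceil> \<le> n"
    then have "real (nat \<lceil>X\<rceil>) \<le> real n" by simp
    moreover have "X \<le> real (nat \<lceil>X\<rceil>)" by linarith
    ultimately show "X \<le> real n" by linarith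
  qed
qed

lemma t_ge:
  assumes M0: "M > 0" and k1: "k \<ge> 1" and n: "real n \<ge> M ^ k"
  shows "real n powr (1 / real k) \<ge> M"
proof -
  have "M ^ k = M powr real k" using M0 by (simp add: powr_realpow)
  then have "(M ^ k) powr (1 / real k) = M" using M0 k1 by (simp add: powr_powr)
  moreover have "(M ^ k) powr (1 / real k) \<le> real n powr (1 / real k)"
    using n M0 by (intro powr_mono2) auto
  ultimately show ?thesis by simp
qed

lemma g_eq:
  assumes npos: "n > 0" and l3: "l \<ge> 3"
  shows "real n powr (2 * real l / real (l - 1)) = (real n powr (1 / real (l - 1))) ^ (2 * l)"
    and "real n powr (2 * real l / real (l - 1)) = real n ^ 2 * (real n powr (1 / real (l - 1))) ^ 2"
proof -
  have k: "real (l - 1) = real l - 1" "real l - 1 > 0" using l3 by (auto simp: of_nat_diff)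
  have tp: "0 < real n powr (1 / real (l - 1))" using npos by simp
  have "(real n powr (1 / real (l - 1))) ^ (2 * l) = (real n powr (1 / real (l - 1))) powr real (2 * l)"
    using powr_realpow[OF tp, of "2 * l"] by simp
  also have "\<dots> = real n powr (1 / real (l - 1) * real (2 * l))" by (simp add: powr_powr)
  also have "1 / real (l - 1) * real (2 * l) = 2 * real l / real (l - 1)" by simp
  finally show "real n powr (2 * real l / real (l - 1)) = (real n powr (1 / real (l - 1))) ^ (2 * l)" by simp
  have rn: "real n > 0" using npos by simp
  have a1: "real n ^ 2 = real n powr 2" using powr_realpow[OF rn, of 2] by simp
  have a2: "(real n powr (1 / real (l - 1))) ^ 2 = (real n powr (1 / real (l - 1))) powr 2"
    using powr_realpow[OF tp, of 2] by simp
  have a3: "(real n powr (1 / real (l - 1))) powr 2 = real n powr (2 / real (l - 1))"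
    by (simp add: powr_powr)
  have "real n ^ 2 * (real n powr (1 / real (l - 1))) ^ 2 = real n powr 2 * real n powr (2 / real (l - 1))"
    using a1 a2 a3 by simp
  also have "\<dots> = real n powr (2 + 2 / real (l - 1))" using npos by (simp add: powr_add)
  also have "2 + 2 / real (l - 1) = 2 * real l / real (l - 1)" using k by (simp add: field_simps)
  finally show "real n powr (2 * real l / real (l - 1)) = real n ^ 2 * (real n powr (1 / real (l - 1))) ^ 2" by simp
qed

theorem corollary1:
  fixes l :: nat
  assumes "l \<ge> 3"
    and girth_conj: "\<exists>c::real. c > 0 \<and> (\<forall>\<^sub>F n in sequentially. \<exists>E. simple_graph n E
            \<and> real (card E) \<ge> c * real n powr (1 + 1 / real (l - 1))
            \<and> (\<forall>k. has_cycle E k \<longrightarrow> k > 2 * (l - 1)))"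
  shows "(\<lambda>n. real (ex_even_cycle l n)) \<in> \<Theta>(\<lambda>n. real n powr (2 * real l / real (l - 1)))"
proof -
  note l3 = assms(1)
  obtain c :: real where c0: "c > 0" and ev: "\<forall>\<^sub>F n in sequentially. \<exists>E. simple_graph n E
            \<and> real (card E) \<ge> c * real n powr (1 + 1 / real (l - 1))
            \<and> (\<forall>k. has_cycle E k \<longrightarrow> k > 2 * (l - 1))" using girth_conj by blast
  define M where "M = max 1 (max (8 / c) (2 / (c / 8) ^ l))"
  have M0: "M > 0" unfolding M_def by simp
  define c1 where "c1 = (c / 8) ^ (2 * l) / (8 * real l ^ 2)"
  have c1pos: "c1 > 0" unfolding c1_def using c0 l3 by simp
  have evM: "eventually (\<lambda>n::nat. real n \<ge> M ^ (l - 1)) sequentially" by (rule ev_real_ge)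
  show ?thesis
  proof (rule bigthetaI'[of c1 144])
    show "0 < c1" by (rule c1pos)
    show "0 < (144::real)" by simp
    show "\<forall>\<^sub>F n in sequentially. c1 * norm (real n powr (2 * real l / real (l - 1))) \<le> norm (real (ex_even_cycle l n))
         \<and> norm (real (ex_even_cycle l n)) \<le> 144 * norm (real n powr (2 * real l / real (l - 1)))"
      using ev evM
    proof (eventually_elim)
      case (elim n)
      obtain E where E: "simple_graph n E" "real (card E) \<ge> c * real n powr (1 + 1 / real (l - 1))"
        "\<forall>k. has_cycle E k \<longrightarrow> k > 2 * (l - 1)" using elim(1) by blast
      define t where "t = real n powr (1 / real (l - 1))"
      have Mk: "M ^ (l - 1) \<ge> 1" using M0 unfolding M_def by simp
      have npos: "n > 0" using elim(2) Mk by (cases n) auto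
      have tM: "t \<ge> M" unfolding t_def by (rule t_ge[OF M0 _ elim(2)]) (use l3 in auto)
      have t1: "t \<ge> 1" using tM unfolding M_def by simp
      have T1: "c / 4 * t \<ge> 2"
      proof -
        have "t \<ge> 8 / c" using tM unfolding M_def by simp
        then have "c * t \<ge> 8" using c0 by (simp add: divide_le_eq mult.commute)
        then show ?thesis by simp
      qed
      have T2: "(c / 8) ^ l * t \<ge> 2"
      proof -
        have cl: "(c / 8) ^ l > 0" using c0 by simp
        have "t \<ge> 2 / (c / 8) ^ l" using tM unfolding M_def by simp
        then show ?thesis using cl by (simp add: divide_le_eq mult.commute)
      qed
      have lo: "real (ex_even_cycle l n) \<ge> c1 * t ^ (2 * l)"
        unfolding c1_def using ex_lower[OF l3 c0 npos E(1) E(2) E(3) t_def T1 T2] by simp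
      have up: "real (ex_even_cycle l n) \<le> 16 * (real n * (t + 2)) ^ 2"
        unfolding t_def by (rule ex_upper[OF l3])
      have "(real n * (t + 2)) ^ 2 \<le> (real n * (3 * t)) ^ 2"
        using t1 by (intro power_mono mult_left_mono) auto
      then have up2: "real (ex_even_cycle l n) \<le> 144 * (real n ^ 2 * t ^ 2)"
        using up by (simp add: power_mult_distrib)
      have g1: "real n powr (2 * real l / real (l - 1)) = t ^ (2 * l)"
        unfolding t_def by (rule g_eq(1)[OF npos l3])
      have g2: "real n powr (2 * real l / real (l - 1)) = real n ^ 2 * t ^ 2"
        unfolding t_def by (rule g_eq(2)[OF npos l3])
      have gn: "norm (real n powr (2 * real l / real (l - 1))) = real n powr (2 * real l / real (l - 1))"
        by simp
      show ?case using lo up2 g1 g2 gn by simp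
    qed
  qed
qed

end
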